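(* Let $\eta=(x_1,\dots,x_s;\sigma_0,\dots,\sigma_s)\in\widetilde{\mathbb{B}}(\lambda)_{\mathrm{cl}}$. Let $j\in I$ and $1\le u\le s-1$ with $\langle x_{u+1}\Lambda,\alpha_j^\vee\rangle>0$, and let $x_u=w_0\xleftarrow{\beta_1}w_1\xleftarrow{}\cdots\xleftarrow{\beta_n}w_n=x_{u+1}$ be a directed $\sigma_u$-path from $x_{u+1}$ to $x_u$. If there exists $0\le k<n$ with $\langle w_k\Lambda,\alpha_j^\vee\rangle\le0$, then $H^\eta_j(\sigma_u)\in\mathbb{Z}$. In particular, if $\langle x_u\Lambda,\alpha_j^\vee\rangle\le0$, then $H^\eta_j(\sigma_u)\in\mathbb{Z}$.
   Context: Let $\mathfrak{g}$ be an untwisted affine Lie algebra with index set $I$, distinguished node $0$, $I_0=I\setminus\{0\}$, simple roots $\alpha_j$, coroots $\alpha_j^\vee$, fundamental weights $\Lambda_j$, null root $\delta$, central element $c$, weight lattice $P$; $\mathrm{cl}:\mathfrak{h}^*\to\mathfrak{h}^*/\mathbb{C}\delta$, $P_{\mathrm{cl}}=\mathrm{cl}(P)$ with pairing $\langle\mathrm{cl}(\mu),\alpha_j^\vee\rangle=\langle\mu,\alpha_j^\vee\rangle$. Let $\Delta_0$ be the finite root system (indexed by $I_0$) with positive roots $\Delta_0^+$, highest root $\theta$, Weyl group $W_0$ generated by $r_j$ ($j\in I_0$); $\alpha_0^\vee=-\theta^\vee+c$. Let $\lambda=\sum_{i\in I_0}m_i\varpi_i$ ($m_i\in\mathbb{Z}_{\ge0}$,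 $\varpi_i=\Lambda_i-a_i^\vee\Lambda_0$), $\Lambda=\mathrm{cl}(\lambda)$, $J=\{j\in I_0\mid\langle\Lambda,\alpha_j^\vee\rangle=0\}$, $W_J=\langle r_j\mid j\in J\rangle$, $\Delta_J^+=\Delta_0^+\cap\bigoplus_{j\in J}\mathbb{Z}\alpha_j$, $W_0^J$ the minimal-length representatives of $W_0/W_J$, $\lfloor w\rfloor$ the representative of $wW_J$, $\ell$ the length, $\rho,\rho_J$ half-sums of positive roots of $\Delta_0,\Delta_J$. The parabolic quantum Bruhat graph has vertices $W_0^J$ and an edge $\lfloor wr_\beta\rfloor\xleftarrow{\beta}w$ for $w\in W_0^J$, $\beta\in\Delta_0^+\setminus\Delta_J^+$ whenever $\ell(\lfloor wr_\beta\rfloor)=\ell(w)+1$ or $\ell(\lfloor wr_\beta\rfloor)=\ell(w)-2\langle\rho-\rho_J,\beta^\vee\rangle+1$. For rational $0<\sigma<1$, a directed $\sigma$-path from $y$ to $x$ is a chain of edges $x=w_0\xleftarrow{\beta_1}\cdots\xleftarrow{\beta_n}w_n=y$ with $\sigma\langle\Lambda,\beta_k^\vee\rangle\in\mathbb{Z}$ for all $k$. $\widetilde{\mathbb{B}}(\lambda)_{\mathrm{cl}}$ is the set of pairs $\eta=(x_1,\dots,x_s;\sigma_0,\dots,\sigma_s)$ with $x_k\in W_0^J$, $x_k\ne x_{k+1}$, rationals $0=\sigma_0<\dots<\sigma_s=1$, such that for each $1\le k\le s-1$ a directed $\sigma_k$-path from $x_{k+1}$ to $x_k$ exists; $\eta$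 is identified with the map $\eta:[0,1]\to\mathbb{R}\otimes P_{\mathrm{cl}}$, $\eta(t)=\sum_{l=1}^{k-1}(\sigma_l-\sigma_{l-1})x_l\Lambda+(t-\sigma_{k-1})x_k\Lambda$ for $\sigma_{k-1}\le t\le\sigma_k$. $H^\eta_j(t)=\langle\eta(t),\alpha_j^\vee\rangle$. *)

theory Defs
  imports "HOL-Analysis.Analysis"
begin

text \<open>The finite root system \<Delta>0 (indexed by I0 = {1..r}) of the
untwisted affine Lie algebra is realised as a reduced, irreducible, crystallographic root system
R in a Euclidean space 'a, with simple roots alpha 1, ..., alpha r. The affine node 0 is the
index 0; I = {0..r}.\<close>

definition coroot_pair :: "'a::euclidean_space \<Rightarrow> 'a \<Rightarrow> real" where
  "coroot_pair x b = 2 * (x \<bullet> b) / (b \<bullet> b)"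

definition refl_v :: "'a::euclidean_space \<Rightarrow> 'a \<Rightarrow> 'a" where
  "refl_v b x = x - coroot_pair x b *\<^sub>R b"

definition root_system :: "'a::euclidean_space set \<Rightarrow> bool" where
  "root_system R \<longleftrightarrow> finite R \<and> 0 \<notin> R \<and> span R = UNIV \<and>
     (\<forall>a\<in>R. \<forall>b\<in>R. refl_v a b \<in> R \<and> coroot_pair b a \<in> \<int>) \<and>
     (\<forall>a\<in>R. \<forall>c::real. c *\<^sub>R a \<in> R \<longrightarrow> c = 1 \<or> c = -1)"

definition irreducible_rs :: "'a::euclidean_space set \<Rightarrow> bool" where
  "irreducible_rs R \<longleftrightarrow> \<not> (\<exists>R1 R2. R1 \<noteq> {} \<and> R2 \<noteq> {} \<and> R1 \<union> R2 = R \<and>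
      (\<forall>a\<in>R1. \<forall>b\<in>R2. a \<bullet> b = 0))"

definition nonneg_comb :: "nat \<Rightarrow> (nat \<Rightarrow> 'a::euclidean_space) \<Rightarrow> 'a set" where
  "nonneg_comb r alpha = {v. \<exists>c::nat\<Rightarrow>nat. v = (\<Sum>i=1..r. of_nat (c i) *\<^sub>R alpha i)}"

definition simple_system :: "'a::euclidean_space set \<Rightarrow> nat \<Rightarrow> (nat \<Rightarrow> 'a) \<Rightarrow> bool" where
  "simple_system R r alpha \<longleftrightarrow> (\<forall>i\<in>{1..r}. alpha i \<in> R) \<and> inj_on alpha {1..r} \<and>
     independent (alpha ` {1..r}) \<and>
     (\<forall>b\<in>R. b \<in> nonneg_comb r alpha \<or> - b \<in> nonneg_comb r alpha)"

definition pos_roots :: "'a::euclidean_space set \<Rightarrow> nat \<Rightarrow> (nat \<Rightarrow> 'a) \<Rightarrow> 'a set" where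
  "pos_roots R r alpha = R \<inter> nonneg_comb r alpha"

definition pos_roots_J :: "'a::euclidean_space set \<Rightarrow> nat \<Rightarrow> (nat \<Rightarrow> 'a) \<Rightarrow> nat set \<Rightarrow> 'a set" where
  "pos_roots_J R r alpha J = pos_roots R r alpha \<inter>
     {v. \<exists>c::nat\<Rightarrow>int. v = (\<Sum>i\<in>J. of_int (c i) *\<^sub>R alpha i)}"

definition highest_root :: "'a::euclidean_space set \<Rightarrow> nat \<Rightarrow> (nat \<Rightarrow> 'a) \<Rightarrow> 'a \<Rightarrow> bool" where
  "highest_root R r alpha \<theta> \<longleftrightarrow> \<theta> \<in> pos_roots R r alpha \<and>
     (\<forall>b\<in>pos_roots R r alpha. \<theta> - b \<in> nonneg_comb r alpha)"

definition wprod :: "(nat \<Rightarrow> 'a::euclidean_space) \<Rightarrow> nat list \<Rightarrow> 'a \<Rightarrow> 'a" where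
  "wprod alpha is = foldr (\<lambda>i f. refl_v (alpha i) \<circ> f) is id"

definition weyl_gen :: "(nat \<Rightarrow> 'a::euclidean_space) \<Rightarrow> nat set \<Rightarrow> ('a \<Rightarrow> 'a) set" where
  "weyl_gen alpha K = {wprod alpha is | is. set is \<subseteq> K}"

definition wlen :: "nat \<Rightarrow> (nat \<Rightarrow> 'a::euclidean_space) \<Rightarrow> ('a \<Rightarrow> 'a) \<Rightarrow> nat" where
  "wlen r alpha w = (LEAST n. \<exists>is. set is \<subseteq> {1..r} \<and> length is = n \<and> wprod alpha is = w)"

definition Jset :: "nat \<Rightarrow> (nat \<Rightarrow> 'a::euclidean_space) \<Rightarrow> 'a \<Rightarrow> nat set" where
  "Jset r alpha lam = {j\<in>{1..r}. coroot_pair lam (alpha j) = 0}"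

definition minrep :: "nat \<Rightarrow> (nat \<Rightarrow> 'a::euclidean_space) \<Rightarrow> nat set \<Rightarrow> ('a \<Rightarrow> 'a) set" where
  "minrep r alpha J = {w \<in> weyl_gen alpha {1..r}.
      \<forall>v\<in>weyl_gen alpha J. wlen r alpha w \<le> wlen r alpha (w \<circ> v)}"

definition floorJ :: "nat \<Rightarrow> (nat \<Rightarrow> 'a::euclidean_space) \<Rightarrow> nat set \<Rightarrow> ('a \<Rightarrow> 'a) \<Rightarrow> ('a \<Rightarrow> 'a)" where
  "floorJ r alpha J w = (THE u. u \<in> minrep r alpha J \<and> (\<exists>v\<in>weyl_gen alpha J. u = w \<circ> v))"

definition rho_vec :: "'a::euclidean_space set \<Rightarrow> 'a" where
  "rho_vec S = (1/2) *\<^sub>R (\<Sum>g\<in>S. g)"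

text \<open>Edge  floorJ (w r_b) <-b- w  of the parabolic quantum Bruhat graph.\<close>
definition qbg_edge :: "'a::euclidean_space set \<Rightarrow> nat \<Rightarrow> (nat \<Rightarrow> 'a) \<Rightarrow> nat set \<Rightarrow>
    ('a \<Rightarrow> 'a) \<Rightarrow> 'a \<Rightarrow> ('a \<Rightarrow> 'a) \<Rightarrow> bool" where
  "qbg_edge R r alpha J w b w' \<longleftrightarrow>
     w \<in> minrep r alpha J \<and> b \<in> pos_roots R r alpha - pos_roots_J R r alpha J \<and>
     w' = floorJ r alpha J (w \<circ> refl_v b) \<and>
     (real (wlen r alpha w') = real (wlen r alpha w) + 1 \<or>
      real (wlen r alpha w') = real (wlen r alpha w)
         - 2 * coroot_pair (rho_vec (pos_roots R r alpha) - rho_vec (pos_roots_J R r alpha J)) b + 1)"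

text \<open>Directed sigma-path from y to x:
  x = ws!0 <-(bs!0)- ws!1 <- ... <-(bs!(n-1))- ws!n = y.\<close>
definition sigma_path :: "'a::euclidean_space set \<Rightarrow> nat \<Rightarrow> (nat \<Rightarrow> 'a) \<Rightarrow> 'a \<Rightarrow> real \<Rightarrow>
    ('a \<Rightarrow> 'a) \<Rightarrow> ('a \<Rightarrow> 'a) \<Rightarrow> nat \<Rightarrow> ('a \<Rightarrow> 'a) list \<Rightarrow> 'a list \<Rightarrow> bool" where
  "sigma_path R r alpha lam \<sigma> y x n ws bs \<longleftrightarrow>
     length ws = n + 1 \<and> length bs = n \<and> ws ! 0 = x \<and> ws ! n = y \<and>
     (\<forall>k<n. qbg_edge R r alpha (Jset r alpha lam) (ws ! (k+1)) (bs ! k) (ws ! k) \<and>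
            \<sigma> * coroot_pair lam (bs ! k) \<in> \<int>)"

definition in_Bcl :: "'a::euclidean_space set \<Rightarrow> nat \<Rightarrow> (nat \<Rightarrow> 'a) \<Rightarrow> 'a \<Rightarrow>
    nat \<Rightarrow> (nat \<Rightarrow> ('a \<Rightarrow> 'a)) \<Rightarrow> (nat \<Rightarrow> rat) \<Rightarrow> bool" where
  "in_Bcl R r alpha lam s x \<sigma> \<longleftrightarrow>
     (\<forall>k\<in>{1..s}. x k \<in> minrep r alpha (Jset r alpha lam)) \<and>
     (\<forall>k\<in>{1..<s}. x k \<noteq> x (k+1)) \<and>
     \<sigma> 0 = 0 \<and> \<sigma> s = 1 \<and> (\<forall>k<s. \<sigma> k < \<sigma> (k+1)) \<and>
     (\<forall>k\<in>{1..<s}. \<exists>n ws bs. sigma_path R r alpha lam (of_rat (\<sigma> k)) (x (k+1)) (x k) n ws bs)"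

text \<open>The path eta(t) (in the level-zero weight space; cl identifies it with its finite part).\<close>
definition eta_at :: "'a::euclidean_space \<Rightarrow> nat \<Rightarrow> (nat \<Rightarrow> ('a \<Rightarrow> 'a)) \<Rightarrow> (nat \<Rightarrow> rat) \<Rightarrow> real \<Rightarrow> 'a" where
  "eta_at lam s x \<sigma> t =
     (let k = (LEAST k. 1 \<le> k \<and> t \<le> of_rat (\<sigma> k)) in
       (\<Sum>l\<in>{1..<k}. of_rat (\<sigma> l - \<sigma> (l-1)) *\<^sub>R x l lam) + (t - of_rat (\<sigma> (k-1))) *\<^sub>R x k lam)"

text \<open>\<langle>\<mu>, alpha_j^\<or>\<rangle> for j \<in> I = {0..r} and \<mu> of level zero; alpha_0^\<or> = -\<theta>^\<or> + c.\<close>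
definition pair_I :: "(nat \<Rightarrow> 'a::euclidean_space) \<Rightarrow> 'a \<Rightarrow> 'a \<Rightarrow> nat \<Rightarrow> real" where
  "pair_I alpha \<theta> \<mu> j = (if j = 0 then - coroot_pair \<mu> \<theta> else coroot_pair \<mu> (alpha j))"

definition H_eta :: "(nat \<Rightarrow> 'a::euclidean_space) \<Rightarrow> 'a \<Rightarrow> 'a \<Rightarrow> nat \<Rightarrow> (nat \<Rightarrow> ('a \<Rightarrow> 'a)) \<Rightarrow>
    (nat \<Rightarrow> rat) \<Rightarrow> nat \<Rightarrow> real \<Rightarrow> real" where
  "H_eta alpha \<theta> lam s x \<sigma> j t = pair_I alpha \<theta> (eta_at lam s x \<sigma> t) j"

end

theory Submission
  imports Defs
begin


section \<open>Basic facts on coroot pairing and reflections\<close>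

lemma cp_add: "coroot_pair (x + y) b = coroot_pair x b + coroot_pair y b"
  by (simp add: coroot_pair_def inner_add_left add_divide_distrib distrib_left)
lemma cp_scale: "coroot_pair (c *\<^sub>R x) b = c * coroot_pair x b"
  by (simp add: coroot_pair_def)
lemma cp_neg: "coroot_pair (- x) b = - coroot_pair x b"
  by (simp add: coroot_pair_def)
lemma cp_diff: "coroot_pair (x - y) b = coroot_pair x b - coroot_pair y b"
  by (simp add: coroot_pair_def inner_diff_left diff_divide_distrib right_diff_distrib)
lemma cp_negr: "coroot_pair x (- b) = - coroot_pair x b"
  by (simp add: coroot_pair_def)
lemma cp_self: "b \<noteq> 0 \<Longrightarrow> coroot_pair b b = 2"
  by (simp add: coroot_pair_def)
lemma cp_zero: "coroot_pair 0 b = 0"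
  by (simp add: coroot_pair_def)
lemma cp_sum: "finite S \<Longrightarrow> coroot_pair (\<Sum>x\<in>S. f x) b = (\<Sum>x\<in>S. coroot_pair (f x) b)"
  by (induction S rule: finite_induct) (simp_all add: cp_add cp_zero)

lemma cp_pos_iff: assumes "a \<noteq> 0" "b \<noteq> 0"
  shows "coroot_pair a b > 0 \<longleftrightarrow> coroot_pair b a > 0"
proof -
  have "\<not> b \<bullet> b < 0" "\<not> a \<bullet> a < 0" using assms by (auto simp: not_less)
  then show ?thesis unfolding coroot_pair_def
    by (auto simp add: zero_less_divide_iff inner_commute)
qed
lemma cp_neg_iff: assumes "a \<noteq> 0" "b \<noteq> 0"
  shows "coroot_pair a b < 0 \<longleftrightarrow> coroot_pair b a < 0"
proof -
  have "\<not> b \<bullet> b < 0" "\<not> a \<bullet> a < 0" using assms by (auto simp: not_less)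
  then show ?thesis unfolding coroot_pair_def
    by (auto simp add: divide_less_0_iff inner_commute)
qed

definition ortho :: "('a::euclidean_space \<Rightarrow> 'a) \<Rightarrow> bool" where
  "ortho f \<longleftrightarrow> linear f \<and> (\<forall>x y. f x \<bullet> f y = x \<bullet> y)"

lemma ortho_cp: "ortho f \<Longrightarrow> coroot_pair (f x) (f b) = coroot_pair x b"
  by (simp add: ortho_def coroot_pair_def)

lemma ortho_comp: "ortho f \<Longrightarrow> ortho g \<Longrightarrow> ortho (f \<circ> g)"
  by (simp add: ortho_def linear_compose)

lemma ortho_id: "ortho id"
  by (simp add: ortho_def linear_id)

lemma ortho_inj: assumes "ortho f" shows "inj f"
proof (rule injI)
  fix x y assume "f x = f y"
  then have "f (x - y) = 0" using assms by (simp add: ortho_def linear_diff)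
  then have "(x - y) \<bullet> (x - y) = 0" using assms unfolding ortho_def
    by (metis inner_zero_left)
  then show "x = y" by simp
qed

lemma ortho_neg: "ortho f \<Longrightarrow> f (- x) = - f x"
  by (simp add: ortho_def linear_neg)
lemma ortho_diff: "ortho f \<Longrightarrow> f (x - y) = f x - f y"
  by (simp add: ortho_def linear_diff)
lemma ortho_add: "ortho f \<Longrightarrow> f (x + y) = f x + f y"
  by (simp add: ortho_def linear_add)
lemma ortho_scale: "ortho f \<Longrightarrow> f (c *\<^sub>R x) = c *\<^sub>R f x"
  by (simp add: ortho_def linear_scale)
lemma ortho_zero: "ortho f \<Longrightarrow> f 0 = 0"
  by (simp add: ortho_def linear_0)
lemma ortho_sum: "ortho f \<Longrightarrow> f (\<Sum>i\<in>S. g i) = (\<Sum>i\<in>S. f (g i))"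
  by (simp add: ortho_def linear_sum)

lemma refl_linear: "linear (refl_v b)"
  unfolding refl_v_def coroot_pair_def
  by (rule linearI) (auto simp: inner_add_left algebra_simps add_divide_distrib)

lemma refl_ortho: assumes "b \<noteq> 0" shows "ortho (refl_v b)"
proof -
  have bb: "b \<bullet> b \<noteq> 0" using assms by simp
  have "refl_v b x \<bullet> refl_v b y = x \<bullet> y" for x y
    unfolding refl_v_def coroot_pair_def using bb
    by (simp add: inner_diff_left inner_diff_right inner_commute field_simps)
  then show ?thesis using refl_linear by (simp add: ortho_def)
qed

lemma refl_invol: assumes "b \<noteq> 0" shows "refl_v b (refl_v b x) = x"
  using assms unfolding refl_v_def
  by (simp add: cp_diff cp_scale cp_self algebra_simps)

lemma refl_invol_comp: "b \<noteq> 0 \<Longrightarrow> refl_v b \<circ> refl_v b = id"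
  by (simp add: fun_eq_iff refl_invol)

lemma refl_self: "b \<noteq> 0 \<Longrightarrow> refl_v b b = - b"
  by (simp add: refl_v_def cp_self scaleR_2)

lemma refl_negb: "refl_v (- b) = refl_v b"
  by (simp add: fun_eq_iff refl_v_def cp_negr)

lemma refl_conj: "ortho f \<Longrightarrow> f (refl_v b x) = refl_v (f b) (f x)"
  by (simp add: refl_v_def ortho_diff ortho_scale ortho_cp)

lemma cp_refl_swap: assumes "b \<noteq> 0" shows "coroot_pair (refl_v b x) y = coroot_pair x (refl_v b y)"
proof -
  have "coroot_pair (refl_v b x) y = coroot_pair (refl_v b (refl_v b x)) (refl_v b y)"
    using ortho_cp[OF refl_ortho[OF assms]] by simp
  then show ?thesis using refl_invol[OF assms] by simp
qed

lemma cp_refl_left: "b \<noteq> 0 \<Longrightarrow> coroot_pair (refl_v b x) b = - coroot_pair x b"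
  by (simp add: refl_v_def cp_diff cp_scale cp_self)


locale rsys =
  fixes R :: "'a::euclidean_space set" and r :: nat and alpha :: "nat \<Rightarrow> 'a"
  assumes rs: "root_system R" and ss: "simple_system R r alpha"
begin

abbreviation "NC \<equiv> nonneg_comb r alpha"

lemma finR: "finite R" and zR: "0 \<notin> R"
  and reflR: "a \<in> R \<Longrightarrow> b \<in> R \<Longrightarrow> refl_v a b \<in> R"
  and cpZ: "a \<in> R \<Longrightarrow> b \<in> R \<Longrightarrow> coroot_pair b a \<in> \<int>"
  and reduced: "a \<in> R \<Longrightarrow> c *\<^sub>R a \<in> R \<Longrightarrow> c = 1 \<or> c = -1"
  using rs unfolding root_system_def by auto

lemma alphaR: "i \<in> {1..r} \<Longrightarrow> alpha i \<in> R"
  and injal: "inj_on alpha {1..r}"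
  and indep: "independent (alpha ` {1..r})"
  and pn: "b \<in> R \<Longrightarrow> b \<in> NC \<or> - b \<in> NC"
  using ss unfolding simple_system_def by auto

lemma R_nz: "b \<in> R \<Longrightarrow> b \<noteq> 0" using zR by auto

lemma negR: "b \<in> R \<Longrightarrow> - b \<in> R"
  using reflR[of b b] refl_self[OF R_nz] by auto

lemma coef_zero:
  assumes "(\<Sum>i=1..r. a i *\<^sub>R alpha i) = 0" "i \<in> {1..r}"
  shows "a i = 0"
proof -
  let ?B = "alpha ` {1..r}"
  let ?u = "\<lambda>v. a (the_inv_into {1..r} alpha v)"
  have "(\<Sum>v\<in>?B. ?u v *\<^sub>R v) = (\<Sum>i=1..r. a i *\<^sub>R alpha i)"
  proof -
    have "(\<Sum>v\<in>?B. ?u v *\<^sub>R v) = (\<Sum>i\<in>{1..r}. ?u (alpha i) *\<^sub>R alpha i)"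
      using sum.reindex[OF injal, of "\<lambda>v. ?u v *\<^sub>R v"] by (simp add: o_def)
    also have "\<dots> = (\<Sum>i=1..r. a i *\<^sub>R alpha i)"
      by (intro sum.cong refl) (metis the_inv_into_f_f[OF injal])
    finally show ?thesis .
  qed
  then have h: "(\<Sum>v\<in>?B. ?u v *\<^sub>R v) = 0" using assms(1) by simp
  have ie: "\<And>t u v. finite t \<Longrightarrow> t \<subseteq> ?B \<Longrightarrow> (\<Sum>v\<in>t. u v *\<^sub>R v) = 0 \<Longrightarrow> v \<in> t \<Longrightarrow> u v = 0"
    using indep unfolding real_vector.independent_explicit_module by blast
  have "?u (alpha i) = 0" by (rule ie[of ?B]) (use assms(2) h in auto)
  then show ?thesis using the_inv_into_f_f[OF injal assms(2)] by simp
qed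

lemma coef_eq:
  assumes "(\<Sum>i=1..r. a i *\<^sub>R alpha i) = (\<Sum>i=1..r. b i *\<^sub>R alpha i)" "i \<in> {1..r}"
  shows "a i = b i"
proof -
  have "(\<Sum>i=1..r. (a i - b i) *\<^sub>R alpha i) = 0"
    using assms(1) by (simp add: scaleR_diff_left sum_subtractf)
  from coef_zero[OF this assms(2)] show ?thesis by simp
qed

lemma NC_add: "x \<in> NC \<Longrightarrow> y \<in> NC \<Longrightarrow> x + y \<in> NC"
  unfolding nonneg_comb_def
proof clarify
  fix c d :: "nat \<Rightarrow> nat"
  show "\<exists>e. (\<Sum>i=1..r. real (c i) *\<^sub>R alpha i) + (\<Sum>i=1..r. real (d i) *\<^sub>R alpha i)
      = (\<Sum>i=1..r. real (e i) *\<^sub>R alpha i)"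
    by (rule exI[of _ "\<lambda>i. c i + d i"]) (simp add: sum.distrib scaleR_add_left)
qed

lemma NC_scale: "x \<in> NC \<Longrightarrow> real n *\<^sub>R x \<in> NC"
  unfolding nonneg_comb_def
proof clarify
  fix c :: "nat \<Rightarrow> nat"
  show "\<exists>e. real n *\<^sub>R (\<Sum>i=1..r. real (c i) *\<^sub>R alpha i)
      = (\<Sum>i=1..r. real (e i) *\<^sub>R alpha i)"
    by (rule exI[of _ "\<lambda>i. n * c i"]) (simp add: scaleR_sum_right)
qed

lemma NC_zero: "0 \<in> NC"
  unfolding nonneg_comb_def by (rule CollectI, rule exI[of _ "\<lambda>i. 0"]) simp

lemma sum_single: assumes "i \<in> {1..r}"
  shows "t *\<^sub>R alpha i = (\<Sum>k=1..r. (if k = i then t else 0) *\<^sub>R alpha k)"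
proof -
  have "(\<Sum>k=1..r. (if k = i then t else 0) *\<^sub>R alpha k) = (\<Sum>k\<in>{1..r}. if k = i then t *\<^sub>R alpha k else 0)"
    by (rule sum.cong) auto
  also have "\<dots> = t *\<^sub>R alpha i" using assms by (simp add: sum.delta')
  finally show ?thesis by simp
qed

lemma NC_alpha: assumes "i \<in> {1..r}" shows "alpha i \<in> NC"
  unfolding nonneg_comb_def
proof (rule CollectI, rule exI[of _ "\<lambda>k. if k = i then 1 else 0"])
  show "alpha i = (\<Sum>k=1..r. real (if k = i then 1 else 0) *\<^sub>R alpha k)"
  proof -
    have "(\<Sum>k=1..r. real (if k = i then 1 else 0) *\<^sub>R alpha k) = (\<Sum>k=1..r. (if k = i then 1 else 0) *\<^sub>R alpha k)"
      by (rule sum.cong) auto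
    then show ?thesis using sum_single[OF assms, of 1] by simp
  qed
qed

lemma NC_sum: "finite S \<Longrightarrow> (\<And>x. x \<in> S \<Longrightarrow> f x \<in> NC) \<Longrightarrow> (\<Sum>x\<in>S. f x) \<in> NC"
  by (induction S rule: finite_induct) (auto simp: NC_zero NC_add)

lemma NC_both: assumes "x \<in> NC" "- x \<in> NC" shows "x = 0"
proof -
  obtain c d :: "nat \<Rightarrow> nat" where c: "x = (\<Sum>i=1..r. real (c i) *\<^sub>R alpha i)"
    and d: "- x = (\<Sum>i=1..r. real (d i) *\<^sub>R alpha i)"
    using assms unfolding nonneg_comb_def by blast
  have h: "(\<Sum>i=1..r. (real (c i) + real (d i)) *\<^sub>R alpha i) = 0"
    unfolding scaleR_add_left sum.distrib by (simp only: c[symmetric] d[symmetric] add.right_inverse)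
  have "\<forall>i\<in>{1..r}. real (c i) + real (d i) = 0" using coef_zero[OF h] by blast
  then have "\<forall>i\<in>{1..r}. c i = 0" by auto
  then show ?thesis using c by simp
qed

lemma root_excl: "b \<in> R \<Longrightarrow> b \<in> NC \<Longrightarrow> - b \<in> NC \<Longrightarrow> False"
  using NC_both zR by blast

lemma root_notneg: "b \<in> R \<Longrightarrow> b \<in> NC \<longleftrightarrow> - b \<notin> NC"
  using root_excl pn by blast


lemma simple_perm:
  assumes i: "i \<in> {1..r}" and b: "b \<in> R" "b \<in> NC" and ne: "b \<noteq> alpha i"
  shows "refl_v (alpha i) b \<in> NC"
proof (rule ccontr)
  assume nn: "refl_v (alpha i) b \<notin> NC"
  have rR: "refl_v (alpha i) b \<in> R" using reflR alphaR i b by blast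
  then have "- refl_v (alpha i) b \<in> NC" using pn nn by blast
  then obtain d :: "nat \<Rightarrow> nat" where d: "- refl_v (alpha i) b = (\<Sum>k=1..r. real (d k) *\<^sub>R alpha k)"
    unfolding nonneg_comb_def by blast
  obtain c :: "nat \<Rightarrow> nat" where c: "b = (\<Sum>k=1..r. real (c k) *\<^sub>R alpha k)"
    using b unfolding nonneg_comb_def by blast
  have "\<exists>k\<in>{1..r}. k \<noteq> i \<and> c k > 0"
  proof (rule ccontr)
    assume "\<not> ?thesis"
    then have z: "\<forall>k\<in>{1..r}. k \<noteq> i \<longrightarrow> c k = 0" by auto
    have "b = (\<Sum>k=1..r. (if k = i then real (c i) else 0) *\<^sub>R alpha k)"
      unfolding c by (rule sum.cong) (use z in auto)
    also have "\<dots> = real (c i) *\<^sub>R alpha i" using sum_single[OF i] by simp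
    finally have bi: "b = real (c i) *\<^sub>R alpha i" .
    have "real (c i) = 1 \<or> real (c i) = -1" using reduced[OF alphaR[OF i], of "real (c i)"] b(1) bi by simp
    then have "real (c i) = 1" by auto
    then show False using bi ne by simp
  qed
  then obtain k where k: "k \<in> {1..r}" "k \<noteq> i" "c k > 0" by blast
  let ?t = "coroot_pair b (alpha i)"
  have "refl_v (alpha i) b = b - ?t *\<^sub>R alpha i" by (simp add: refl_v_def)
  then have "(\<Sum>k=1..r. (real (c k) + real (d k) - (if k = i then ?t else 0)) *\<^sub>R alpha k) = 0"
  proof -
    assume rb: "refl_v (alpha i) b = b - ?t *\<^sub>R alpha i"
    have "(\<Sum>k=1..r. (real (c k) + real (d k) - (if k = i then ?t else 0)) *\<^sub>R alpha k)
      = (\<Sum>k=1..r. real (c k) *\<^sub>R alpha k) + (\<Sum>k=1..r. real (d k) *\<^sub>R alpha k)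
        - (\<Sum>k=1..r. (if k = i then ?t else 0) *\<^sub>R alpha k)"
      by (simp only: scaleR_add_left scaleR_diff_left sum.distrib sum_subtractf)
    also have "\<dots> = b + (- refl_v (alpha i) b) - ?t *\<^sub>R alpha i"
      by (simp only: c[symmetric] d[symmetric] sum_single[OF i, symmetric])
    also have "\<dots> = 0" by (simp add: rb)
    finally show ?thesis .
  qed
  from coef_zero[OF this k(1)] k show False by simp
qed

lemma simple_perm_neg:
  assumes i: "i \<in> {1..r}" and b: "b \<in> R" "- b \<in> NC" and ne: "b \<noteq> - alpha i"
  shows "- refl_v (alpha i) b \<in> NC"
proof -
  have "refl_v (alpha i) (- b) \<in> NC"
    using simple_perm[OF i negR[OF b(1)] b(2)] ne by (metis minus_minus)
  moreover have "refl_v (alpha i) (- b) = - refl_v (alpha i) b"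
    by (simp add: refl_v_def cp_neg)
  ultimately show ?thesis by simp
qed

section \<open>Weyl group words\<close>

lemma wprod_Nil[simp]: "wprod alpha [] = id"
  by (simp add: wprod_def)
lemma wprod_Cons[simp]: "wprod alpha (i # is) = refl_v (alpha i) \<circ> wprod alpha is"
  by (simp add: wprod_def)
lemma wprod_append: "wprod alpha (is @ js) = wprod alpha is \<circ> wprod alpha js"
  by (induction "is") auto

lemma alpha_nz: "i \<in> {1..r} \<Longrightarrow> alpha i \<noteq> 0"
  using alphaR R_nz by blast

lemma wprod_ortho: "set is \<subseteq> {1..r} \<Longrightarrow> ortho (wprod alpha is)"
  by (induction "is") (auto simp: ortho_id intro!: ortho_comp refl_ortho alpha_nz)

lemma wprod_R: "set is \<subseteq> {1..r} \<Longrightarrow> b \<in> R \<Longrightarrow> wprod alpha is b \<in> R"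
  by (induction "is") (auto intro!: reflR alphaR)

lemma wprod_rev: "set is \<subseteq> {1..r} \<Longrightarrow> wprod alpha (rev is) \<circ> wprod alpha is = id"
proof (induction "is")
  case (Cons i "is")
  have "wprod alpha (rev (i # is)) \<circ> wprod alpha (i # is)
      = wprod alpha (rev is) \<circ> (refl_v (alpha i) \<circ> refl_v (alpha i)) \<circ> wprod alpha is"
    by (simp add: wprod_append comp_assoc)
  also have "\<dots> = wprod alpha (rev is) \<circ> wprod alpha is"
    using Cons.prems by (simp add: refl_invol_comp alpha_nz)
  also have "\<dots> = id" by (rule Cons.IH) (use Cons.prems in simp)
  finally show ?case .
qed simp

lemma wprod_rev2: "set is \<subseteq> {1..r} \<Longrightarrow> wprod alpha is \<circ> wprod alpha (rev is) = id"
  using wprod_rev[of "rev is"] by simp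

lemma weyl_gen_iff: "x \<in> weyl_gen alpha K \<longleftrightarrow> (\<exists>is. set is \<subseteq> K \<and> x = wprod alpha is)"
  by (auto simp: weyl_gen_def)

lemma wlen_le: "set is \<subseteq> {1..r} \<Longrightarrow> wlen r alpha (wprod alpha is) \<le> length is"
  unfolding wlen_def by (rule Least_le) blast

lemma wlen_word: assumes "x \<in> weyl_gen alpha {1..r}"
  shows "\<exists>is. set is \<subseteq> {1..r} \<and> length is = wlen r alpha x \<and> wprod alpha is = x"
proof -
  obtain ks where "set ks \<subseteq> {1..r}" "x = wprod alpha ks" using assms weyl_gen_iff by blast
  then have "\<exists>n is. set is \<subseteq> {1..r} \<and> length is = n \<and> wprod alpha is = x" by blast
  then show ?thesis unfolding wlen_def by (rule LeastI_ex)
qed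

section \<open>Exchange condition\<close>

lemma exchange:
  assumes "set is \<subseteq> {1..r}" "i \<in> {1..r}" "- wprod alpha is (alpha i) \<in> NC"
  shows "\<exists>js. set js \<subseteq> {1..r} \<and> length js + 1 = length is \<and>
           wprod alpha js = wprod alpha is \<circ> refl_v (alpha i)"
  using assms
proof (induction "is")
  case Nil
  then show ?case using root_excl[OF alphaR NC_alpha] by auto
next
  case (Cons i1 "is")
  let ?x = "wprod alpha is"
  have is1: "set is \<subseteq> {1..r}" "i1 \<in> {1..r}" using Cons by auto
  show ?case
  proof (cases "- ?x (alpha i) \<in> NC")
    case True
    then obtain js where js: "set js \<subseteq> {1..r}" "length js + 1 = length is"
      "wprod alpha js = ?x \<circ> refl_v (alpha i)" using Cons is1 by blast
    show ?thesis
      by (rule exI[of _ "i1 # js"]) (use js is1 in \<open>auto simp: comp_assoc\<close>)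
  next
    case False
    have xR: "?x (alpha i) \<in> R" using wprod_R is1 alphaR Cons by blast
    then have xp: "?x (alpha i) \<in> NC" using pn False by blast
    have "?x (alpha i) = alpha i1"
    proof (rule ccontr)
      assume "?x (alpha i) \<noteq> alpha i1"
      then have "refl_v (alpha i1) (?x (alpha i)) \<in> NC" using simple_perm is1 xR xp by blast
      moreover have "- refl_v (alpha i1) (?x (alpha i)) \<in> NC" using Cons by simp
      ultimately show False using root_excl reflR alphaR is1 xR by blast
    qed
    have "?x \<circ> refl_v (alpha i) = refl_v (alpha i1) \<circ> ?x"
      using refl_conj[OF wprod_ortho[OF is1(1)]] \<open>?x (alpha i) = alpha i1\<close>
      by (simp add: fun_eq_iff)
    then have "wprod alpha (i1 # is) \<circ> refl_v (alpha i) = ?x"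
    proof -
      assume eq: "?x \<circ> refl_v (alpha i) = refl_v (alpha i1) \<circ> ?x"
      have "wprod alpha (i1 # is) \<circ> refl_v (alpha i) = refl_v (alpha i1) \<circ> (?x \<circ> refl_v (alpha i))"
        by (simp add: comp_assoc)
      also have "\<dots> = (refl_v (alpha i1) \<circ> refl_v (alpha i1)) \<circ> ?x" by (simp only: eq comp_assoc)
      also have "\<dots> = ?x" by (simp add: refl_invol_comp[OF alpha_nz[OF is1(2)]])
      finally show ?thesis .
    qed
    then show ?thesis using is1 by (intro exI[of _ "is"]) (simp del: wprod_Cons)
  qed
qed

lemma exchange_left:
  assumes "set is \<subseteq> {1..r}" "i \<in> {1..r}" "- wprod alpha (rev is) (alpha i) \<in> NC"
  shows "\<exists>js. set js \<subseteq> {1..r} \<and> length js + 1 = length is \<and>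
           wprod alpha js = refl_v (alpha i) \<circ> wprod alpha is"
proof -
  obtain js where js: "set js \<subseteq> {1..r}" "length js + 1 = length is"
    "wprod alpha js = wprod alpha (rev is) \<circ> refl_v (alpha i)"
    using exchange[of "rev is" i] assms by auto
  let ?a = "wprod alpha (rev is)" and ?b = "wprod alpha is" and ?s = "refl_v (alpha i)"
  have e1: "?a \<circ> ?s \<circ> (?s \<circ> ?b) = id"
  proof -
    have "?a \<circ> ?s \<circ> (?s \<circ> ?b) = ?a \<circ> (?s \<circ> ?s) \<circ> ?b" by (simp only: comp_assoc)
    also have "\<dots> = ?a \<circ> ?b" by (simp add: refl_invol_comp[OF alpha_nz[OF assms(2)]])
    also have "\<dots> = id" by (rule wprod_rev[OF assms(1)])
    finally show ?thesis .
  qed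
  have "wprod alpha (rev js) = wprod alpha (rev js) \<circ> (?a \<circ> ?s \<circ> (?s \<circ> ?b))"
    by (simp only: e1 comp_id)
  also have "\<dots> = (wprod alpha (rev js) \<circ> wprod alpha js) \<circ> (?s \<circ> ?b)"
    by (simp only: js(3) comp_assoc)
  also have "\<dots> = ?s \<circ> ?b" by (simp only: wprod_rev[OF js(1)] id_comp)
  finally show ?thesis using js by (intro exI[of _ "rev js"]) auto
qed

end


context rsys begin

lemma wg_comp: "x \<in> weyl_gen alpha K \<Longrightarrow> y \<in> weyl_gen alpha K \<Longrightarrow> x \<circ> y \<in> weyl_gen alpha K"
  unfolding weyl_gen_iff by (metis set_append Un_least wprod_append)

lemma wg_id: "id \<in> weyl_gen alpha K"
  unfolding weyl_gen_iff by (rule exI[of _ "[]"]) simp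

lemma wg_single: "i \<in> K \<Longrightarrow> refl_v (alpha i) \<in> weyl_gen alpha K"
  unfolding weyl_gen_iff by (rule exI[of _ "[i]"]) simp

lemma wg_mono: "K \<subseteq> L \<Longrightarrow> x \<in> weyl_gen alpha K \<Longrightarrow> x \<in> weyl_gen alpha L"
  unfolding weyl_gen_iff by blast

lemma wg_inv: assumes "K \<subseteq> {1..r}" "x \<in> weyl_gen alpha K"
  shows "\<exists>y\<in>weyl_gen alpha K. y \<circ> x = id \<and> x \<circ> y = id"
proof -
  obtain ks where ks: "set ks \<subseteq> K" "x = wprod alpha ks" using assms weyl_gen_iff by blast
  then have "set ks \<subseteq> {1..r}" using assms by blast
  moreover have "wprod alpha (rev ks) \<in> weyl_gen alpha K" unfolding weyl_gen_iff
    using ks(1) by (intro exI[of _ "rev ks"]) simp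
  ultimately show ?thesis using ks wprod_rev wprod_rev2 by blast
qed

lemma wg_ortho: "K \<subseteq> {1..r} \<Longrightarrow> x \<in> weyl_gen alpha K \<Longrightarrow> ortho x"
  unfolding weyl_gen_iff using wprod_ortho by blast

lemma wg_R: "K \<subseteq> {1..r} \<Longrightarrow> x \<in> weyl_gen alpha K \<Longrightarrow> b \<in> R \<Longrightarrow> x b \<in> R"
  unfolding weyl_gen_iff using wprod_R by blast

section \<open>Reflections in roots belong to the Weyl group\<close>

lemma refl_in_W_aux:
  assumes K: "K \<subseteq> {1..r}"
  shows "\<forall>b c. b \<in> R \<and> b = (\<Sum>i=1..r. real (c i) *\<^sub>R alpha i) \<and> (\<forall>i\<in>{1..r}. i \<notin> K \<longrightarrow> c i = 0)
          \<and> sum c {1..r} = h \<longrightarrow> refl_v b \<in> weyl_gen alpha K"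
proof (induction h rule: less_induct)
  case (less h)
  show ?case
  proof (intro allI impI, elim conjE)
    fix b and c :: "nat \<Rightarrow> nat"
    assume bR: "b \<in> R" and bc: "b = (\<Sum>i=1..r. real (c i) *\<^sub>R alpha i)"
      and supp: "\<forall>i\<in>{1..r}. i \<notin> K \<longrightarrow> c i = 0" and hc: "sum c {1..r} = h"
    have bNC: "b \<in> NC" using bc unfolding nonneg_comb_def by blast
    have "b \<bullet> b > 0" using R_nz[OF bR] by simp
    moreover have "b \<bullet> b = (\<Sum>i=1..r. real (c i) * (b \<bullet> alpha i))"
      by (subst (2) bc) (simp add: inner_sum_right)
    ultimately have "\<exists>i\<in>{1..r}. c i > 0 \<and> b \<bullet> alpha i > 0"
    proof -
      assume p: "b \<bullet> b > 0" and e: "b \<bullet> b = (\<Sum>i=1..r. real (c i) * (b \<bullet> alpha i))"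
      show ?thesis
      proof (rule ccontr)
        assume "\<not> ?thesis"
        then have "\<forall>i\<in>{1..r}. real (c i) * (b \<bullet> alpha i) \<le> 0"
        proof (intro ballI)
          fix i assume "i \<in> {1..r}" "\<not> (\<exists>i\<in>{1..r}. 0 < c i \<and> 0 < b \<bullet> alpha i)"
          then have "c i = 0 \<or> b \<bullet> alpha i \<le> 0" by auto
          then show "real (c i) * (b \<bullet> alpha i) \<le> 0"
            by (auto intro: mult_nonneg_nonpos)
        qed
        then have "(\<Sum>i=1..r. real (c i) * (b \<bullet> alpha i)) \<le> 0" by (intro sum_nonpos) blast
        then show False using p e by simp
      qed
    qed
    then obtain i where i: "i \<in> {1..r}" "c i > 0" "b \<bullet> alpha i > 0" by blast
    have iK: "i \<in> K" using supp i by (metis not_gr_zero)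
    show "refl_v b \<in> weyl_gen alpha K"
    proof (cases "b = alpha i")
      case True
      then show ?thesis using wg_single[OF iK] by simp
    next
      case False
      let ?b' = "refl_v (alpha i) b"
      let ?m = "coroot_pair b (alpha i)"
      have b'R: "?b' \<in> R" using reflR alphaR i bR by blast
      have b'NC: "?b' \<in> NC" using simple_perm[OF i(1) bR bNC False] .
      have mpos: "?m > 0" using i(3) alpha_nz[OF i(1)]
        by (simp add: coroot_pair_def)
      obtain c' :: "nat \<Rightarrow> nat" where c': "?b' = (\<Sum>k=1..r. real (c' k) *\<^sub>R alpha k)"
        using b'NC unfolding nonneg_comb_def by blast
      have "?b' = (\<Sum>k=1..r. (real (c k) - (if k = i then ?m else 0)) *\<^sub>R alpha k)"
      proof -
        have "(\<Sum>k=1..r. (real (c k) - (if k = i then ?m else 0)) *\<^sub>R alpha k)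
          = (\<Sum>k=1..r. real (c k) *\<^sub>R alpha k) - (\<Sum>k=1..r. (if k = i then ?m else 0) *\<^sub>R alpha k)"
          by (simp only: scaleR_diff_left sum_subtractf)
        also have "\<dots> = b - ?m *\<^sub>R alpha i" by (simp only: bc[symmetric] sum_single[OF i(1), symmetric])
        finally show ?thesis by (simp add: refl_v_def)
      qed
      then have eqs: "(\<Sum>k=1..r. real (c' k) *\<^sub>R alpha k) = (\<Sum>k=1..r. (real (c k) - (if k = i then ?m else 0)) *\<^sub>R alpha k)"
        using c' by simp
      have cc: "\<And>k. k \<in> {1..r} \<Longrightarrow> real (c' k) = real (c k) - (if k = i then ?m else 0)"
        using coef_eq[OF eqs] by blast
      have supp': "\<forall>k\<in>{1..r}. k \<notin> K \<longrightarrow> c' k = 0"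
      proof (intro ballI impI)
        fix k assume k: "k \<in> {1..r}" "k \<notin> K"
        then have "k \<noteq> i" using iK by blast
        then have "real (c' k) = real (c k)" using cc[OF k(1)] by simp
        then show "c' k = 0" using supp k by simp
      qed
      have "real (sum c' {1..r}) = (\<Sum>k=1..r. real (c k) - (if k = i then ?m else 0))"
        by (simp add: cc)
      also have "\<dots> = real (sum c {1..r}) - ?m"
        using i(1) by (simp add: sum_subtractf)
      finally have "sum c' {1..r} < h" using mpos hc by linarith
      then have "refl_v ?b' \<in> weyl_gen alpha K" using less b'R c' supp' by blast
      then obtain ks where ks: "set ks \<subseteq> K" "refl_v ?b' = wprod alpha ks"
        using weyl_gen_iff by blast
      have bb: "refl_v (alpha i) ?b' = b" using refl_invol[OF alpha_nz[OF i(1)]] by simp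
      have "refl_v b = refl_v (alpha i) \<circ> refl_v ?b' \<circ> refl_v (alpha i)"
      proof
        fix y
        have "refl_v (alpha i) (refl_v ?b' (refl_v (alpha i) y))
            = refl_v (refl_v (alpha i) ?b') (refl_v (alpha i) (refl_v (alpha i) y))"
          by (rule refl_conj[OF refl_ortho[OF alpha_nz[OF i(1)]]])
        also have "\<dots> = refl_v b y" using bb refl_invol[OF alpha_nz[OF i(1)]] by simp
        finally show "refl_v b y = (refl_v (alpha i) \<circ> refl_v ?b' \<circ> refl_v (alpha i)) y" by simp
      qed
      also have "\<dots> = wprod alpha ([i] @ ks @ [i])" by (simp add: wprod_append ks(2) comp_assoc)
      finally show ?thesis using ks iK unfolding weyl_gen_iff by (intro exI[of _ "[i] @ ks @ [i]"]) auto
    qed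
  qed
qed

lemma refl_in_W:
  assumes "K \<subseteq> {1..r}" "b \<in> R" "b = (\<Sum>i=1..r. real (c i) *\<^sub>R alpha i)"
    "\<forall>i\<in>{1..r}. i \<notin> K \<longrightarrow> c i = 0"
  shows "refl_v b \<in> weyl_gen alpha K"
  using refl_in_W_aux[OF assms(1), of "sum c {1..r}"] assms by blast

lemma refl_in_W_full: assumes "b \<in> R" shows "refl_v b \<in> weyl_gen alpha {1..r}"
proof -
  have "b \<in> NC \<or> - b \<in> NC" using pn assms by blast
  then show ?thesis
  proof
    assume "b \<in> NC"
    then obtain c where "b = (\<Sum>i=1..r. real (c i) *\<^sub>R alpha i)" unfolding nonneg_comb_def by blast
    then show ?thesis using refl_in_W[of "{1..r}" b c] assms by blast
  next
    assume "- b \<in> NC"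
    then obtain c where "- b = (\<Sum>i=1..r. real (c i) *\<^sub>R alpha i)" unfolding nonneg_comb_def by blast
    then have "refl_v (- b) \<in> weyl_gen alpha {1..r}" using refl_in_W[of "{1..r}" "- b" c] negR[OF assms] by blast
    then show ?thesis by (simp add: refl_negb)
  qed
qed

section \<open>Coefficient preservation\<close>

lemma coef_pres:
  assumes "set ks \<subseteq> K" "k \<notin> K" "K \<subseteq> {1..r}" "b = (\<Sum>i=1..r. a i *\<^sub>R alpha i)"
  shows "\<exists>a'. wprod alpha ks b = (\<Sum>i=1..r. a' i *\<^sub>R alpha i) \<and> a' k = a k"
  using assms
proof (induction ks arbitrary: b a)
  case Nil
  then show ?case by auto
next
  case (Cons j ks)
  obtain a' where a': "wprod alpha ks b = (\<Sum>i=1..r. a' i *\<^sub>R alpha i)" "a' k = a k"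
    using Cons.IH[of b a] Cons.prems by auto
  have j: "j \<in> {1..r}" "j \<noteq> k" using Cons.prems by auto
  let ?t = "coroot_pair (wprod alpha ks b) (alpha j)"
  have "wprod alpha (j # ks) b = wprod alpha ks b - ?t *\<^sub>R alpha j"
    by (simp add: refl_v_def)
  also have "\<dots> = (\<Sum>i=1..r. (a' i - (if i = j then ?t else 0)) *\<^sub>R alpha i)"
    by (simp only: a'(1) sum_single[OF j(1)] scaleR_diff_left sum_subtractf)
  finally show ?case using a'(2) j by (intro exI[of _ "\<lambda>i. a' i - (if i = j then ?t else 0)"]) auto
qed

lemma pos_pres:
  assumes K: "K \<subseteq> {1..r}" and v: "v \<in> weyl_gen alpha K" and b: "b \<in> R"
    "b = (\<Sum>i=1..r. real (c i) *\<^sub>R alpha i)" and k: "k \<in> {1..r}" "k \<notin> K" "c k > 0"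
  shows "v b \<in> NC"
proof (rule ccontr)
  assume "v b \<notin> NC"
  moreover have vR: "v b \<in> R" using wg_R[OF K v b(1)] .
  ultimately have "- v b \<in> NC" using pn by blast
  then obtain d where d: "- v b = (\<Sum>i=1..r. real (d i) *\<^sub>R alpha i)" unfolding nonneg_comb_def by blast
  obtain ks where ks: "set ks \<subseteq> K" "v = wprod alpha ks" using v weyl_gen_iff by blast
  obtain a' where a': "v b = (\<Sum>i=1..r. a' i *\<^sub>R alpha i)" "a' k = real (c k)"
    using coef_pres[OF ks(1) k(2) K b(2)] ks(2) by blast
  have "v b = - (- v b)" by simp
  also have "\<dots> = - (\<Sum>i=1..r. real (d i) *\<^sub>R alpha i)" by (simp only: d)
  also have "\<dots> = (\<Sum>i=1..r. (- real (d i)) *\<^sub>R alpha i)" by (simp add: sum_negf)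
  finally have vd: "v b = (\<Sum>i=1..r. (- real (d i)) *\<^sub>R alpha i)" .
  have "a' k = - real (d k)" using coef_eq[OF trans[OF a'(1)[symmetric] vd] k(1)] .
  then show False using a'(2) k(3) by simp
qed

end

section \<open>The dominant weight and the parabolic subgroup\<close>

locale rsysl = rsys +
  fixes lam :: 'a and m :: "nat \<Rightarrow> nat"
  assumes lam: "\<forall>i\<in>{1..r}. coroot_pair lam (alpha i) = real (m i)"
begin

abbreviation "J \<equiv> Jset r alpha lam"

lemma J_sub: "J \<subseteq> {1..r}" by (auto simp: Jset_def)

lemma J_iff: "i \<in> J \<longleftrightarrow> i \<in> {1..r} \<and> m i = 0"
  using lam by (auto simp: Jset_def)

lemma cp_lam_expand:
  assumes "b = (\<Sum>i=1..r. a i *\<^sub>R alpha i)"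
  shows "coroot_pair lam b = (\<Sum>i=1..r. a i * real (m i) * (alpha i \<bullet> alpha i)) / (b \<bullet> b)"
proof -
  have li: "lam \<bullet> alpha i = real (m i) * (alpha i \<bullet> alpha i) / 2" if "i \<in> {1..r}" for i
  proof -
    have "coroot_pair lam (alpha i) = real (m i)" using lam that by blast
    then show ?thesis using alpha_nz[OF that] by (simp add: coroot_pair_def field_simps)
  qed
  have "2 * (lam \<bullet> b) = (\<Sum>i=1..r. 2 * (a i * (lam \<bullet> alpha i)))"
    by (simp add: assms inner_sum_right sum_distrib_left)
  also have "\<dots> = (\<Sum>i=1..r. a i * real (m i) * (alpha i \<bullet> alpha i))"
    by (rule sum.cong) (simp_all add: li)
  finally show ?thesis by (simp add: coroot_pair_def)
qed

lemma cp_lam_NC: assumes "b \<in> NC" shows "coroot_pair lam b \<ge> 0"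
proof -
  obtain c where c: "b = (\<Sum>i=1..r. real (c i) *\<^sub>R alpha i)" using assms unfolding nonneg_comb_def by blast
  show ?thesis unfolding cp_lam_expand[OF c]
    by (intro divide_nonneg_nonneg sum_nonneg) auto
qed

lemma cp_lam_zero_iff:
  assumes bR: "b \<in> R" and c: "b = (\<Sum>i=1..r. real (c i) *\<^sub>R alpha i)"
  shows "coroot_pair lam b = 0 \<longleftrightarrow> (\<forall>i\<in>{1..r}. i \<notin> J \<longrightarrow> c i = 0)"
proof -
  have bb: "b \<bullet> b > 0" using R_nz[OF bR] by simp
  have nn: "\<forall>i\<in>{1..r}. real (c i) * real (m i) * (alpha i \<bullet> alpha i) \<ge> 0" by auto
  have aa: "i \<in> {1..r} \<Longrightarrow> alpha i \<bullet> alpha i > 0" for i using alpha_nz by simp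
  have "coroot_pair lam b = 0 \<longleftrightarrow> (\<Sum>i=1..r. real (c i) * real (m i) * (alpha i \<bullet> alpha i)) = 0"
    unfolding cp_lam_expand[OF c] using bb by simp
  also have "\<dots> \<longleftrightarrow> (\<forall>i\<in>{1..r}. real (c i) * real (m i) * (alpha i \<bullet> alpha i) = 0)"
    using nn by (simp add: sum_nonneg_eq_0_iff)
  also have "\<dots> \<longleftrightarrow> (\<forall>i\<in>{1..r}. i \<notin> J \<longrightarrow> c i = 0)"
  proof (rule ball_cong[OF refl])
    fix i assume i: "i \<in> {1..r}"
    have "real (c i) * real (m i) * (alpha i \<bullet> alpha i) = 0 \<longleftrightarrow> c i = 0 \<or> m i = 0"
      using aa[OF i] by simp
    also have "\<dots> \<longleftrightarrow> (i \<notin> J \<longrightarrow> c i = 0)" using J_iff[of i] i by auto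
    finally show "real (c i) * real (m i) * (alpha i \<bullet> alpha i) = 0 \<longleftrightarrow> (i \<notin> J \<longrightarrow> c i = 0)" .
  qed
  finally show ?thesis .
qed

lemma posJ_iff:
  "b \<in> pos_roots_J R r alpha J \<longleftrightarrow> b \<in> R \<and> b \<in> NC \<and> coroot_pair lam b = 0"
proof
  assume b: "b \<in> pos_roots_J R r alpha J"
  then have bR: "b \<in> R" and bNC: "b \<in> NC" by (auto simp: pos_roots_J_def pos_roots_def)
  obtain c where c: "b = (\<Sum>i=1..r. real (c i) *\<^sub>R alpha i)" using bNC unfolding nonneg_comb_def by blast
  obtain z :: "nat \<Rightarrow> int" where z: "b = (\<Sum>i\<in>J. of_int (z i) *\<^sub>R alpha i)"
    using b by (auto simp: pos_roots_J_def)
  have "b = (\<Sum>i=1..r. (if i \<in> J then of_int (z i) else 0) *\<^sub>R alpha i)"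
  proof -
    have "(\<Sum>i=1..r. (if i \<in> J then of_int (z i) else 0) *\<^sub>R alpha i)
        = (\<Sum>i\<in>{1..r}. if i \<in> J then of_int (z i) *\<^sub>R alpha i else 0)"
      by (rule sum.cong) auto
    also have "\<dots> = (\<Sum>i\<in>{1..r} \<inter> J. of_int (z i) *\<^sub>R alpha i)"
      by (simp add: sum.inter_restrict)
    also have "{1..r} \<inter> J = J" using J_sub by blast
    finally show ?thesis using z by simp
  qed
  then have eqs: "(\<Sum>i=1..r. real (c i) *\<^sub>R alpha i) = (\<Sum>i=1..r. (if i \<in> J then of_int (z i) else 0) *\<^sub>R alpha i)"
    using c by simp
  have "\<forall>i\<in>{1..r}. i \<notin> J \<longrightarrow> c i = 0"
  proof (intro ballI impI)
    fix i assume "i \<in> {1..r}" "i \<notin> J"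
    then show "c i = 0" using coef_eq[OF eqs \<open>i \<in> {1..r}\<close>] by simp
  qed
  then show "b \<in> R \<and> b \<in> NC \<and> coroot_pair lam b = 0"
    using cp_lam_zero_iff[OF bR c] bR bNC by blast
next
  assume b: "b \<in> R \<and> b \<in> NC \<and> coroot_pair lam b = 0"
  obtain c where c: "b = (\<Sum>i=1..r. real (c i) *\<^sub>R alpha i)" using b unfolding nonneg_comb_def by blast
  have z: "\<forall>i\<in>{1..r}. i \<notin> J \<longrightarrow> c i = 0" using cp_lam_zero_iff[OF _ c] b by blast
  have "b = (\<Sum>i\<in>J. of_int (int (c i)) *\<^sub>R alpha i)"
  proof -
    have "(\<Sum>i\<in>J. of_int (int (c i)) *\<^sub>R alpha i) = (\<Sum>i\<in>J. real (c i) *\<^sub>R alpha i)" by simp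
    also have "\<dots> = (\<Sum>i=1..r. real (c i) *\<^sub>R alpha i)"
      by (rule sum.mono_neutral_left) (use J_sub z in auto)
    finally show ?thesis using c by simp
  qed
  then show "b \<in> pos_roots_J R r alpha J" using b unfolding pos_roots_J_def pos_roots_def
    by (intro IntI CollectI exI[of _ "\<lambda>i. int (c i)"]) auto
qed

lemma PJ_iff: assumes "b \<in> R"
  shows "b \<in> pos_roots R r alpha - pos_roots_J R r alpha J \<longleftrightarrow> coroot_pair lam b > 0"
proof
  assume "b \<in> pos_roots R r alpha - pos_roots_J R r alpha J"
  then have "b \<in> NC" "coroot_pair lam b \<noteq> 0" using posJ_iff assms by (auto simp: pos_roots_def)
  then show "coroot_pair lam b > 0" using cp_lam_NC by fastforce
next
  assume p: "coroot_pair lam b > 0"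
  have "b \<in> NC"
  proof (rule ccontr)
    assume "b \<notin> NC"
    then have "- b \<in> NC" using pn assms by blast
    then show False using cp_lam_NC[of "- b"] p by (simp add: cp_negr)
  qed
  then show "b \<in> pos_roots R r alpha - pos_roots_J R r alpha J"
    using posJ_iff assms p by (auto simp: pos_roots_def)
qed

lemma refl_in_WJ: assumes "b \<in> R" "coroot_pair lam b = 0"
  shows "refl_v b \<in> weyl_gen alpha J"
proof -
  have "b \<in> NC \<or> - b \<in> NC" using pn assms by blast
  then show ?thesis
  proof
    assume "b \<in> NC"
    then obtain c where c: "b = (\<Sum>i=1..r. real (c i) *\<^sub>R alpha i)" unfolding nonneg_comb_def by blast
    then show ?thesis using refl_in_W[OF J_sub assms(1) c] cp_lam_zero_iff[OF assms(1) c] assms by blast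
  next
    assume "- b \<in> NC"
    then obtain c where c: "- b = (\<Sum>i=1..r. real (c i) *\<^sub>R alpha i)" unfolding nonneg_comb_def by blast
    have "coroot_pair lam (- b) = 0" using assms by (simp add: cp_negr)
    then have "refl_v (- b) \<in> weyl_gen alpha J"
      using refl_in_W[OF J_sub negR[OF assms(1)] c] cp_lam_zero_iff[OF negR[OF assms(1)] c] by blast
    then show ?thesis by (simp add: refl_negb)
  qed
qed

lemma WJ_fix: "v \<in> weyl_gen alpha J \<Longrightarrow> v lam = lam"
proof -
  assume "v \<in> weyl_gen alpha J"
  then obtain ks where ks: "set ks \<subseteq> J" "v = wprod alpha ks" using weyl_gen_iff by blast
  have "wprod alpha ks lam = lam" using ks(1)
    by (induction ks) (auto simp: refl_v_def Jset_def)
  then show ?thesis using ks by simp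
qed

lemma pos_pres_J:
  assumes v: "v \<in> weyl_gen alpha J" and b: "b \<in> R" "coroot_pair lam b > 0"
  shows "v b \<in> NC"
proof -
  have "b \<in> NC" using PJ_iff[OF b(1)] b(2) by (auto simp: pos_roots_def)
  then obtain c where c: "b = (\<Sum>i=1..r. real (c i) *\<^sub>R alpha i)" unfolding nonneg_comb_def by blast
  then obtain k where "k \<in> {1..r}" "k \<notin> J" "c k > 0"
    using cp_lam_zero_iff[OF b(1) c] b(2) by auto
  then show ?thesis using pos_pres[OF J_sub v b(1) c] by blast
qed

end


context rsys begin

definition Lf :: "'a \<Rightarrow> nat" where
  "Lf \<mu> = card {b\<in>R. b \<in> NC \<and> coroot_pair \<mu> b < 0}"

definition Uset :: "'a \<Rightarrow> 'a set" where
  "Uset \<mu> = {a\<in>R. coroot_pair \<mu> a > 0}"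

definition dd :: "'a \<Rightarrow> 'a \<Rightarrow> real" where
  "dd g a = (if - a \<in> NC then 1 else 0) - (if - refl_v g a \<in> NC then 1 else 0)"

lemma finU: "finite (Uset \<mu>)" using finR by (simp add: Uset_def)

lemma sum_ind: "finite A \<Longrightarrow> (\<Sum>x\<in>A. if P x then (1::real) else 0) = real (card {x\<in>A. P x})"
  by (simp add: sum.inter_filter[symmetric])

lemma L_simple_le: assumes i: "i \<in> {1..r}"
  shows "Lf (refl_v (alpha i) \<mu>) \<le> Lf \<mu> + 1"
proof -
  let ?s = "refl_v (alpha i)"
  have "{b\<in>R. b \<in> NC \<and> coroot_pair (?s \<mu>) b < 0}
      \<subseteq> insert (alpha i) (?s ` {b\<in>R. b \<in> NC \<and> coroot_pair \<mu> b < 0})"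
  proof
    fix b assume b: "b \<in> {b\<in>R. b \<in> NC \<and> coroot_pair (?s \<mu>) b < 0}"
    show "b \<in> insert (alpha i) (?s ` {b\<in>R. b \<in> NC \<and> coroot_pair \<mu> b < 0})"
    proof (cases "b = alpha i")
      case False
      have "?s b \<in> R" using reflR alphaR i b by blast
      moreover have "?s b \<in> NC" using simple_perm[OF i _ _ False] b by blast
      moreover have "coroot_pair \<mu> (?s b) < 0"
        using b cp_refl_swap[OF alpha_nz[OF i]] by simp
      moreover have "b = ?s (?s b)" using refl_invol[OF alpha_nz[OF i]] by simp
      ultimately show ?thesis by blast
    qed simp
  qed
  then have "Lf (?s \<mu>) \<le> card (insert (alpha i) (?s ` {b\<in>R. b \<in> NC \<and> coroot_pair \<mu> b < 0}))"
    unfolding Lf_def by (intro card_mono) (auto simp: finR)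
  also have "\<dots> \<le> card (?s ` {b\<in>R. b \<in> NC \<and> coroot_pair \<mu> b < 0}) + 1"
  proof -
    have "finite (?s ` {b\<in>R. b \<in> NC \<and> coroot_pair \<mu> b < 0})" using finR by simp
    then show ?thesis by (simp add: card_insert_if)
  qed
  also have "\<dots> \<le> Lf \<mu> + 1" unfolding Lf_def
    using card_image_le[of "{b\<in>R. b \<in> NC \<and> coroot_pair \<mu> b < 0}" ?s] finR by simp
  finally show ?thesis .
qed

lemma L_as_U: "real (Lf \<mu>) = (\<Sum>a\<in>Uset \<mu>. if - a \<in> NC then 1 else 0)"
proof -
  have "{b\<in>R. b \<in> NC \<and> coroot_pair \<mu> b < 0} = uminus ` {a\<in>Uset \<mu>. - a \<in> NC}"
  proof (intro set_eqI iffI)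
    fix b assume "b \<in> {b\<in>R. b \<in> NC \<and> coroot_pair \<mu> b < 0}"
    then have "- b \<in> {a\<in>Uset \<mu>. - a \<in> NC}" by (auto simp: Uset_def negR cp_negr)
    then show "b \<in> uminus ` {a\<in>Uset \<mu>. - a \<in> NC}" by (metis image_eqI minus_minus)
  next
    fix b assume "b \<in> uminus ` {a\<in>Uset \<mu>. - a \<in> NC}"
    then show "b \<in> {b\<in>R. b \<in> NC \<and> coroot_pair \<mu> b < 0}" by (auto simp: Uset_def negR cp_negr)
  qed
  then have "Lf \<mu> = card {a\<in>Uset \<mu>. - a \<in> NC}"
    unfolding Lf_def by (simp add: card_image inj_on_def)
  then show ?thesis using sum_ind[OF finU] by simp
qed

lemma L_refl_as_U: assumes g: "g \<in> R"
  shows "real (Lf (refl_v g \<mu>)) = (\<Sum>a\<in>Uset \<mu>. if - refl_v g a \<in> NC then 1 else 0)"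
proof -
  let ?s = "refl_v g"
  have gnz: "g \<noteq> 0" using R_nz g .
  let ?f = "\<lambda>a. - ?s a"
  have "{b\<in>R. b \<in> NC \<and> coroot_pair (?s \<mu>) b < 0} = ?f ` {a\<in>Uset \<mu>. - ?s a \<in> NC}"
  proof (intro set_eqI iffI)
    fix b assume b: "b \<in> {b\<in>R. b \<in> NC \<and> coroot_pair (?s \<mu>) b < 0}"
    let ?a = "- ?s b"
    have "?a \<in> R" using b reflR[OF g] negR by blast
    moreover have "coroot_pair \<mu> ?a > 0"
      using b cp_refl_swap[OF gnz, of \<mu> b] by (simp add: cp_negr)
    moreover have "- ?s ?a = b"
      using refl_invol[OF gnz] ortho_neg[OF refl_ortho[OF gnz]] by simp
    ultimately show "b \<in> ?f ` {a\<in>Uset \<mu>. - ?s a \<in> NC}"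
      using b by (auto simp: Uset_def intro!: image_eqI[of _ _ ?a])
  next
    fix b assume "b \<in> ?f ` {a\<in>Uset \<mu>. - ?s a \<in> NC}"
    then obtain a where a: "a \<in> R" "coroot_pair \<mu> a > 0" "- ?s a \<in> NC" "b = - ?s a"
      by (auto simp: Uset_def)
    have "b \<in> R" using a reflR[OF g] negR by blast
    moreover have "coroot_pair (?s \<mu>) b < 0"
      using a cp_refl_swap[OF gnz, of \<mu> b] refl_invol[OF gnz] ortho_neg[OF refl_ortho[OF gnz]]
      by (simp add: cp_negr)
    ultimately show "b \<in> {b\<in>R. b \<in> NC \<and> coroot_pair (?s \<mu>) b < 0}" using a by blast
  qed
  moreover have "inj ?f" using ortho_inj[OF refl_ortho[OF gnz]] by (simp add: inj_def)
  ultimately have "Lf (?s \<mu>) = card {a\<in>Uset \<mu>. - ?s a \<in> NC}"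
    unfolding Lf_def by (simp add: card_image inj_on_subset[of ?f UNIV])
  then show ?thesis using sum_ind[OF finU] by simp
qed

lemma D_as_U: assumes "g \<in> R"
  shows "real (Lf \<mu>) - real (Lf (refl_v g \<mu>)) = (\<Sum>a\<in>Uset \<mu>. dd g a)"
  using L_as_U[of \<mu>] L_refl_as_U[OF assms, of \<mu>] unfolding dd_def by (simp add: sum_subtractf)

definition Uneg :: "'a \<Rightarrow> 'a \<Rightarrow> 'a set" where
  "Uneg \<mu> g = {a\<in>Uset \<mu>. coroot_pair a g < 0}"
definition Sset :: "'a \<Rightarrow> 'a \<Rightarrow> 'a set" where
  "Sset \<mu> g = Uneg \<mu> g \<union> refl_v g ` Uneg \<mu> g"
definition Vset :: "'a \<Rightarrow> 'a \<Rightarrow> 'a set" where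
  "Vset \<mu> g = Uset \<mu> - Sset \<mu> g"

lemma refl_mu: "refl_v g \<mu> = \<mu> - coroot_pair \<mu> g *\<^sub>R g" by (simp add: refl_v_def)

lemma cp_refl_mu: "coroot_pair (refl_v g \<mu>) a = coroot_pair \<mu> a - coroot_pair \<mu> g * coroot_pair g a"
  by (simp add: refl_mu cp_diff cp_scale)

lemma S_sub: assumes g: "g \<in> R" and k: "coroot_pair \<mu> g > 0"
  shows "Sset \<mu> g \<subseteq> Uset \<mu>"
proof
  fix x assume "x \<in> Sset \<mu> g"
  then consider "x \<in> Uneg \<mu> g" | a where "a \<in> Uneg \<mu> g" "x = refl_v g a" unfolding Sset_def by blast
  then show "x \<in> Uset \<mu>"
  proof cases
    case 1 then show ?thesis by (simp add: Uneg_def)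
  next
    case 2
    have a: "a \<in> R" "coroot_pair \<mu> a > 0" "coroot_pair a g < 0" using 2 by (auto simp: Uneg_def Uset_def)
    have "coroot_pair g a < 0" using cp_neg_iff[OF R_nz[OF a(1)] R_nz[OF g]] a(3) by simp
    then have "coroot_pair \<mu> g * coroot_pair g a < 0" using k by (simp add: mult_pos_neg)
    then have "coroot_pair (refl_v g \<mu>) a > 0" using a(2) cp_refl_mu[of g \<mu> a] by linarith
    then have "coroot_pair \<mu> x > 0" using 2 cp_refl_swap[OF R_nz[OF g]] by simp
    moreover have "x \<in> R" using 2 a reflR[OF g] by blast
    ultimately show ?thesis by (simp add: Uset_def)
  qed
qed

lemma S_inv: assumes g: "g \<in> R" shows "refl_v g ` Sset \<mu> g = Sset \<mu> g"
proof -
  have "refl_v g ` (refl_v g ` Uneg \<mu> g) = Uneg \<mu> g"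
    using refl_invol[OF R_nz[OF g]] by (force simp: image_image)
  then show ?thesis unfolding Sset_def by (auto simp: image_Un)
qed

lemma finS: "finite (Sset \<mu> g)"
  using finR by (simp add: Sset_def Uneg_def Uset_def)

lemma sum_S_zero:
  assumes g: "g \<in> R" and f: "\<forall>a\<in>Sset \<mu> g. f (refl_v g a) = - f a"
  shows "sum f (Sset \<mu> g) = (0::real)"
proof -
  let ?S = "Sset \<mu> g"
  have inj: "inj_on (refl_v g) ?S" using ortho_inj[OF refl_ortho[OF R_nz[OF g]]] by (simp add: inj_on_def inj_def)
  have "sum f ?S = sum f (refl_v g ` ?S)" using S_inv[OF g] by simp
  also have "\<dots> = sum (f \<circ> refl_v g) ?S" by (rule sum.reindex[OF inj])
  also have "\<dots> = sum (\<lambda>a. - f a) ?S" using f by (intro sum.cong) auto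
  also have "\<dots> = - sum f ?S" by (simp add: sum_negf)
  finally show ?thesis by simp
qed

lemma dd_refl: "g \<noteq> 0 \<Longrightarrow> dd g (refl_v g a) = - dd g a"
  by (simp add: dd_def refl_invol)

lemma sum_UV:
  assumes g: "g \<in> R" and k: "coroot_pair \<mu> g > 0" and f: "\<forall>a\<in>Sset \<mu> g. f (refl_v g a) = - f a"
  shows "sum f (Uset \<mu>) = (sum f (Vset \<mu> g) :: real)"
proof -
  have "sum f (Uset \<mu>) = sum f (Uset \<mu> - Sset \<mu> g) + sum f (Sset \<mu> g)"
    using S_sub[OF g k] finU by (simp add: sum.subset_diff)
  then show ?thesis using sum_S_zero[OF g f] by (simp add: Vset_def)
qed

lemma V_props: "a \<in> Vset \<mu> g \<Longrightarrow> a \<in> R \<and> coroot_pair a g \<ge> 0"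
  by (auto simp: Vset_def Sset_def Uneg_def Uset_def)

lemma g_in_V: assumes g: "g \<in> R" and k: "coroot_pair \<mu> g > 0" shows "g \<in> Vset \<mu> g"
proof -
  have "g \<in> Uset \<mu>" using g k by (simp add: Uset_def)
  moreover have "g \<notin> Uneg \<mu> g" using cp_self[OF R_nz[OF g]] by (simp add: Uneg_def)
  moreover have "g \<notin> refl_v g ` Uneg \<mu> g"
  proof
    assume "g \<in> refl_v g ` Uneg \<mu> g"
    then obtain a where a: "a \<in> Uneg \<mu> g" "g = refl_v g a" by blast
    then have "a = - g" using refl_invol[OF R_nz[OF g]] refl_self[OF R_nz[OF g]] by metis
    then show False using a k by (simp add: Uneg_def Uset_def cp_negr)
  qed
  ultimately show ?thesis by (simp add: Vset_def Sset_def)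
qed

lemma a_in_V: assumes g: "g \<in> R" and a: "a \<in> Uset \<mu>" "coroot_pair a g > 0" "refl_v g a \<notin> Uset \<mu>"
  shows "a \<in> Vset \<mu> g"
proof -
  have "a \<notin> Uneg \<mu> g" using a by (simp add: Uneg_def)
  moreover have "a \<notin> refl_v g ` Uneg \<mu> g"
  proof
    assume "a \<in> refl_v g ` Uneg \<mu> g"
    then obtain b where b: "b \<in> Uneg \<mu> g" "a = refl_v g b" by blast
    then have "b = refl_v g a" using refl_invol[OF R_nz[OF g]] by simp
    then show False using b a by (simp add: Uneg_def)
  qed
  ultimately show ?thesis using a by (simp add: Vset_def Sset_def)
qed

lemma cp_nat: assumes "a \<in> R" "g \<in> R" "coroot_pair a g \<ge> 0"
  shows "\<exists>n::nat. coroot_pair a g = real n"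
proof -
  obtain z :: int where z: "coroot_pair a g = of_int z" using cpZ[OF assms(2,1)] Ints_cases by metis
  then have "z \<ge> 0" using assms(3) by simp
  then show ?thesis using z by (intro exI[of _ "nat z"]) simp
qed

lemma dd_bounds: "dd g a \<le> 1" "dd g a \<ge> -1"
  by (auto simp: dd_def)

lemma dd_le_c: assumes "a \<in> R" "g \<in> R" "coroot_pair a g \<ge> 0"
  shows "dd g a \<le> coroot_pair a g"
proof (cases "coroot_pair a g = 0")
  case True
  then have "refl_v g a = a" by (simp add: refl_v_def)
  then show ?thesis using True by (simp add: dd_def)
next
  case False
  obtain n :: nat where "coroot_pair a g = real n" using cp_nat assms by blast
  then have "coroot_pair a g \<ge> 1" using False by simp
  then show ?thesis using dd_bounds(1)[of g a] by linarith
qed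

lemma dd_pos_g: assumes a: "a \<in> R" and g: "g \<in> R" "g \<in> NC" and c: "coroot_pair a g \<ge> 0"
  shows "dd g a \<le> 0"
proof (cases "- a \<in> NC")
  case True
  obtain n :: nat where n: "coroot_pair a g = real n" using cp_nat a g(1) c by blast
  have "- refl_v g a = - a + real n *\<^sub>R g" by (simp add: refl_v_def n)
  then have "- refl_v g a \<in> NC" using NC_add[OF True NC_scale[OF g(2)]] by simp
  then show ?thesis using True by (simp add: dd_def)
qed (simp add: dd_def)

lemma dd_neg_g: assumes a: "a \<in> R" and g: "g \<in> R" "- g \<in> NC" and c: "coroot_pair a g \<ge> 0"
  shows "dd g a \<ge> 0"
proof (cases "- a \<in> NC")
  case False
  then have aNC: "a \<in> NC" using pn a by blast
  obtain n :: nat where n: "coroot_pair a g = real n" using cp_nat a g(1) c by blast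
  have "refl_v g a = a + real n *\<^sub>R (- g)" by (simp add: refl_v_def n)
  then have "refl_v g a \<in> NC" using NC_add[OF aNC NC_scale[OF g(2)]] by simp
  then have "- refl_v g a \<notin> NC" using root_excl reflR[OF g(1) a] by blast
  then show ?thesis using False by (simp add: dd_def)
qed (auto simp: dd_def)

lemma dd_gg: assumes g: "g \<in> R"
  shows "g \<in> NC \<Longrightarrow> dd g g = -1" "- g \<in> NC \<Longrightarrow> dd g g = 1"
  using root_excl[OF g] refl_self[OF R_nz[OF g]] by (auto simp: dd_def)

lemma D_as_V: assumes g: "g \<in> R" and k: "coroot_pair \<mu> g > 0"
  shows "real (Lf \<mu>) - real (Lf (refl_v g \<mu>)) = (\<Sum>a\<in>Vset \<mu> g. dd g a)"
proof -
  have "\<forall>a\<in>Sset \<mu> g. dd g (refl_v g a) = - dd g a" using dd_refl[OF R_nz[OF g]] by blast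
  then show ?thesis using D_as_U[OF g] sum_UV[OF g k] by simp
qed

lemma P_as_V: assumes g: "g \<in> R" and k: "coroot_pair \<mu> g > 0"
  shows "(\<Sum>a\<in>Uset \<mu>. coroot_pair a g) = (\<Sum>a\<in>Vset \<mu> g. coroot_pair a g)"
proof -
  have "\<forall>a\<in>Sset \<mu> g. coroot_pair (refl_v g a) g = - coroot_pair a g"
    using cp_refl_left[OF R_nz[OF g]] by blast
  then show ?thesis using sum_UV[OF g k] by simp
qed

lemma finV: "finite (Vset \<mu> g)" using finU by (simp add: Vset_def)

lemma L_up: assumes g: "g \<in> R" "g \<in> NC" and k: "coroot_pair \<mu> g > 0"
  shows "Lf (refl_v g \<mu>) \<ge> Lf \<mu> + 1"
proof -
  let ?V = "Vset \<mu> g"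
  have gV: "g \<in> ?V" using g_in_V[OF g(1) k] .
  have "(\<Sum>a\<in>?V. dd g a) = dd g g + (\<Sum>a\<in>?V - {g}. dd g a)"
    using finV gV by (simp add: sum.remove)
  also have "(\<Sum>a\<in>?V - {g}. dd g a) \<le> 0"
    using V_props dd_pos_g g by (intro sum_nonpos) blast
  finally have "(\<Sum>a\<in>?V. dd g a) \<le> -1" using dd_gg(1)[OF g] by simp
  then show ?thesis using D_as_V[OF g(1) k] by simp
qed

lemma theta_simple: assumes hr: "highest_root R r alpha \<theta>" and i: "i \<in> {1..r}"
  shows "coroot_pair \<theta> (alpha i) \<ge> 0"
proof (rule ccontr)
  assume neg: "\<not> ?thesis"
  have th: "\<theta> \<in> R" "\<theta> \<in> NC" using hr by (auto simp: highest_root_def pos_roots_def)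
  obtain z :: int where z: "coroot_pair \<theta> (alpha i) = of_int z"
    using cpZ[OF alphaR[OF i] th(1)] Ints_cases by metis
  let ?n = "nat (- z)"
  have n: "real ?n = - coroot_pair \<theta> (alpha i)" "?n > 0" using z neg by auto
  have e: "refl_v (alpha i) \<theta> = \<theta> + real ?n *\<^sub>R alpha i" using n by (simp add: refl_v_def)
  have "refl_v (alpha i) \<theta> \<in> pos_roots R r alpha"
    using e reflR[OF alphaR[OF i] th(1)] NC_add[OF th(2) NC_scale[OF NC_alpha[OF i]]]
    by (simp add: pos_roots_def)
  then have "\<theta> - refl_v (alpha i) \<theta> \<in> NC" using hr by (simp add: highest_root_def)
  then have "- (real ?n *\<^sub>R alpha i) \<in> NC" using e by simp
  then have "real ?n *\<^sub>R alpha i = 0" using NC_both NC_scale[OF NC_alpha[OF i]] by blast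
  then show False using n(2) alpha_nz[OF i] by simp
qed

lemma theta_dom: assumes hr: "highest_root R r alpha \<theta>" and g: "g \<in> NC"
  shows "\<theta> \<bullet> g \<ge> 0"
proof -
  obtain c where c: "g = (\<Sum>i=1..r. real (c i) *\<^sub>R alpha i)" using g unfolding nonneg_comb_def by blast
  have "\<theta> \<bullet> alpha i \<ge> 0" if "i \<in> {1..r}" for i
  proof -
    have "coroot_pair \<theta> (alpha i) \<ge> 0" using theta_simple[OF hr that] .
    moreover have "\<theta> \<bullet> alpha i = coroot_pair \<theta> (alpha i) * (alpha i \<bullet> alpha i) / 2"
      using alpha_nz[OF that] by (simp add: coroot_pair_def)
    moreover have "coroot_pair \<theta> (alpha i) * (alpha i \<bullet> alpha i) \<ge> 0"
      using \<open>coroot_pair \<theta> (alpha i) \<ge> 0\<close> by simp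
    ultimately show ?thesis by linarith
  qed
  then have "(\<Sum>i=1..r. real (c i) * (\<theta> \<bullet> alpha i)) \<ge> 0" by (intro sum_nonneg) simp
  then show ?thesis unfolding c by (simp add: inner_sum_right)
qed

lemma simple_minus:
  assumes j: "j \<in> {1..r}" and g: "g \<in> R" "g \<in> NC" and t: "t > 0" and e: "alpha j - t *\<^sub>R g \<in> NC"
  shows "g = alpha j"
proof -
  obtain c where c: "g = (\<Sum>i=1..r. real (c i) *\<^sub>R alpha i)" using g unfolding nonneg_comb_def by blast
  obtain d where d: "alpha j - t *\<^sub>R g = (\<Sum>i=1..r. real (d i) *\<^sub>R alpha i)" using e unfolding nonneg_comb_def by blast
  have e1: "alpha j - t *\<^sub>R g = (\<Sum>i=1..r. (if i = j then 1 else 0) *\<^sub>R alpha i) - (\<Sum>i=1..r. (t * real (c i)) *\<^sub>R alpha i)"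
    using sum_single[OF j, of 1] c by (simp add: scaleR_sum_right)
  have "alpha j - t *\<^sub>R g = (\<Sum>i=1..r. ((if i = j then 1 else 0) - t * real (c i)) *\<^sub>R alpha i)"
    unfolding e1 by (simp add: scaleR_diff_left sum_subtractf)
  then have eq: "(\<Sum>i=1..r. ((if i = j then 1 else 0) - t * real (c i)) *\<^sub>R alpha i) = (\<Sum>i=1..r. real (d i) *\<^sub>R alpha i)"
    using d by simp
  have z: "c i = 0" if "i \<in> {1..r}" "i \<noteq> j" for i
  proof -
    have "- t * real (c i) = real (d i)" using coef_eq[OF eq that(1)] that(2) by simp
    then have "t * real (c i) \<le> 0" by linarith
    then show ?thesis using t by (simp add: mult_le_0_iff)
  qed
  have "g = (\<Sum>i=1..r. (if i = j then real (c j) else 0) *\<^sub>R alpha i)"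
    unfolding c by (rule sum.cong) (use z in auto)
  also have "\<dots> = real (c j) *\<^sub>R alpha j" using sum_single[OF j] by simp
  finally have gj: "g = real (c j) *\<^sub>R alpha j" .
  have "real (c j) = 1 \<or> real (c j) = -1" using reduced[OF alphaR[OF j], of "real (c j)"] g(1) gj by simp
  then have "real (c j) = 1" by auto
  then show ?thesis using gj by simp
qed

lemma key_gamma:
  assumes g: "g \<in> R" and aR: "a \<in> R" and k: "coroot_pair \<mu> g > 0" and ka: "coroot_pair \<mu> a > 0"
    and kb: "coroot_pair (refl_v g \<mu>) a \<le> 0"
    and edge: "real (Lf (refl_v g \<mu>)) = real (Lf \<mu>) + 1 \<or>
       real (Lf (refl_v g \<mu>)) = real (Lf \<mu>) - (\<Sum>b\<in>Uset \<mu>. coroot_pair b g) + 1"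
    and aform: "(\<exists>j\<in>{1..r}. a = alpha j) \<or> (a = - \<theta> \<and> highest_root R r alpha \<theta>)"
  shows "g = a"
proof (rule ccontr)
  assume ne: "g \<noteq> a"
  let ?V = "Vset \<mu> g"
  let ?D = "real (Lf \<mu>) - real (Lf (refl_v g \<mu>))"
  let ?P = "\<Sum>b\<in>Uset \<mu>. coroot_pair b g"
  have gnz: "g \<noteq> 0" using R_nz[OF g] .
  have D: "?D = dd g g + (\<Sum>b\<in>?V - {g}. dd g b)"
    using D_as_V[OF g k] finV g_in_V[OF g k] by (simp add: sum.remove)
  have P: "?P = 2 + (\<Sum>b\<in>?V - {g}. coroot_pair b g)"
    using P_as_V[OF g k] finV g_in_V[OF g k] cp_self[OF gnz] by (simp add: sum.remove)
  have cga: "coroot_pair g a > 0"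
  proof -
    have "coroot_pair \<mu> g * coroot_pair g a > 0" using kb ka cp_refl_mu[of g \<mu> a] by linarith
    then show ?thesis using k by (simp add: zero_less_mult_iff)
  qed
  have cag: "coroot_pair a g > 0" using cp_pos_iff[OF R_nz[OF aR] gnz] cga by simp
  have aU: "a \<in> Uset \<mu>" using aR ka by (simp add: Uset_def)
  have raU: "refl_v g a \<notin> Uset \<mu>" using kb cp_refl_swap[OF gnz, of \<mu> a] by (simp add: Uset_def)
  have aV: "a \<in> ?V - {g}" using a_in_V[OF g aU cag raU] ne by simp
  have Vnn: "\<And>b. b \<in> ?V - {g} \<Longrightarrow> b \<in> R \<and> coroot_pair b g \<ge> 0" using V_props by blast
  have "g \<in> NC \<or> - g \<in> NC" using pn g by blast
  then show False
  proof
    assume gp: "g \<in> NC"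
    have le: "\<And>b. b \<in> ?V - {g} \<Longrightarrow> dd g b \<le> 0" using Vnn dd_pos_g g gp by blast
    have s1: "(\<Sum>b\<in>?V - {g}. dd g b) \<le> 0" using le by (intro sum_nonpos) blast
    have s2: "(\<Sum>b\<in>?V - {g}. coroot_pair b g) \<ge> 0" using Vnn by (intro sum_nonneg) blast
    have Dm: "?D = -1"
    proof -
      have "?D \<le> -1" using D s1 dd_gg(1)[OF g gp] by simp
      moreover have "?P \<ge> 2" using P s2 by simp
      ultimately show ?thesis using edge by linarith
    qed
    then have "(\<Sum>b\<in>?V - {g}. dd g b) = 0" using D dd_gg(1)[OF g gp] by simp
    then have "(\<Sum>b\<in>?V - {g}. - dd g b) = 0" by (simp add: sum_negf)
    moreover have "finite (?V - {g})" using finV by simp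
    ultimately have "\<forall>b\<in>?V - {g}. - dd g b = 0" using le
      by (subst (asm) sum_nonneg_eq_0_iff) auto
    then have dda: "dd g a = 0" using aV by auto
    from aform show False
    proof
      assume "\<exists>j\<in>{1..r}. a = alpha j"
      then obtain j where j: "j \<in> {1..r}" "a = alpha j" by blast
      have "- a \<notin> NC" using root_excl[OF aR] NC_alpha[OF j(1)] j(2) by blast
      then have "- refl_v g a \<notin> NC" using dda by (simp add: dd_def split: if_splits)
      then have "refl_v g a \<in> NC" using pn reflR[OF g aR] by blast
      then have "alpha j - coroot_pair a g *\<^sub>R g \<in> NC" using j(2) by (simp add: refl_v_def)
      then have "g = alpha j" using simple_minus[OF j(1) g gp cag[unfolded j(2)]] j(2) by simp
      then show False using ne j(2) by simp
    next
      assume th: "a = - \<theta> \<and> highest_root R r alpha \<theta>"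
      have "\<theta> \<bullet> g \<ge> 0" using theta_dom th gp by blast
      moreover have "coroot_pair \<theta> g < 0" using cag th by (simp add: cp_neg)
      moreover have "\<not> g \<bullet> g < 0" by (simp add: not_less)
      ultimately show False by (auto simp: coroot_pair_def divide_less_0_iff)
    qed
  next
    assume gn: "- g \<in> NC"
    have ge: "\<And>b. b \<in> ?V - {g} \<Longrightarrow> dd g b \<ge> 0" using Vnn dd_neg_g g gn by blast
    have s1: "(\<Sum>b\<in>?V - {g}. dd g b) \<ge> 0" using ge by (intro sum_nonneg) blast
    have "?D \<ge> 1" using D s1 dd_gg(2)[OF g gn] by simp
    then have DP: "?D = ?P - 1" using edge by linarith
    have cd: "\<And>b. b \<in> ?V - {g} \<Longrightarrow> coroot_pair b g - dd g b \<ge> 0" using Vnn dd_le_c g by fastforce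
    have "(\<Sum>b\<in>?V - {g}. coroot_pair b g - dd g b) = 0"
      using DP D P dd_gg(2)[OF g gn] by (simp add: sum_subtractf)
    moreover have "finite (?V - {g})" using finV by simp
    ultimately have "\<forall>b\<in>?V - {g}. coroot_pair b g - dd g b = 0" using cd
      by (subst (asm) sum_nonneg_eq_0_iff) auto
    then have ca: "coroot_pair a g = dd g a" using aV by auto
    then have dd1: "dd g a = 1" using cag dd_bounds(1)[of g a] cp_nat[OF aR g] by force
    then have na: "- a \<in> NC" "- refl_v g a \<notin> NC" by (auto simp: dd_def split: if_splits)
    from aform show False
    proof
      assume "\<exists>j\<in>{1..r}. a = alpha j"
      then obtain j where j: "j \<in> {1..r}" "a = alpha j" by blast
      then show False using root_excl[OF aR] NC_alpha[OF j(1)] na(1) by blast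
    next
      assume th: "a = - \<theta> \<and> highest_root R r alpha \<theta>"
      have "refl_v g a \<in> NC" using pn reflR[OF g aR] na(2) by blast
      moreover have "refl_v g a = - (\<theta> + g)" using ca dd1 th by (simp add: refl_v_def)
      ultimately have m: "- (\<theta> + g) \<in> NC" by simp
      have "- g \<in> pos_roots R r alpha" using negR[OF g] gn by (simp add: pos_roots_def)
      then have "\<theta> - (- g) \<in> NC" using th unfolding highest_root_def by blast
      then have "\<theta> + g = 0" using NC_both m by simp
      then show False using ne th by (simp add: add_eq_0_iff2)
    qed
  qed
qed

end


context rsysl begin

abbreviation "WW \<equiv> weyl_gen alpha {1..r}"
abbreviation "WJ \<equiv> weyl_gen alpha J"
abbreviation "MR \<equiv> minrep r alpha J"
abbreviation "wl \<equiv> wlen r alpha"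

lemma WJ_W: "v \<in> WJ \<Longrightarrow> v \<in> WW" using wg_mono[OF J_sub] .

lemma MR_W: "u \<in> MR \<Longrightarrow> u \<in> WW" by (simp add: minrep_def)

lemma MR_min: "u \<in> MR \<Longrightarrow> v \<in> WJ \<Longrightarrow> wl u \<le> wl (u \<circ> v)" by (simp add: minrep_def)

lemma W_ortho: "x \<in> WW \<Longrightarrow> ortho x" using wg_ortho by blast
lemma W_R: "x \<in> WW \<Longrightarrow> b \<in> R \<Longrightarrow> x b \<in> R" using wg_R by blast

lemma wlen_comp_le: assumes "x \<in> WW" "i \<in> {1..r}"
  shows "wl (refl_v (alpha i) \<circ> x) \<le> wl x + 1"
proof -
  obtain ks where ks: "set ks \<subseteq> {1..r}" "length ks = wl x" "wprod alpha ks = x"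
    using wlen_word[OF assms(1)] by blast
  have "wl (wprod alpha (i # ks)) \<le> length (i # ks)" using ks assms(2) by (intro wlen_le) auto
  then show ?thesis using ks by simp
qed

lemma H1: assumes u: "u \<in> MR" and j: "j \<in> J" shows "u (alpha j) \<in> NC"
proof (rule ccontr)
  assume "u (alpha j) \<notin> NC"
  moreover have jr: "j \<in> {1..r}" using j J_sub by blast
  moreover have "u (alpha j) \<in> R" using W_R[OF MR_W[OF u] alphaR[OF jr]] .
  ultimately have n: "- u (alpha j) \<in> NC" using pn by blast
  obtain ks where ks: "set ks \<subseteq> {1..r}" "length ks = wl u" "wprod alpha ks = u"
    using wlen_word[OF MR_W[OF u]] by blast
  obtain js where js: "set js \<subseteq> {1..r}" "length js + 1 = length ks"
      "wprod alpha js = u \<circ> refl_v (alpha j)"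
    using exchange[OF ks(1) jr] n ks(3) by blast
  have "wl (u \<circ> refl_v (alpha j)) \<le> length js" using wlen_le[OF js(1)] js(3) by simp
  moreover have "wl u \<le> wl (u \<circ> refl_v (alpha j))" using MR_min[OF u wg_single[OF j]] .
  ultimately show False using js(2) ks(2) by simp
qed

lemma H_J_pos: assumes u: "u \<in> MR" and b: "b \<in> R" "b \<in> NC" "coroot_pair lam b = 0"
  shows "u b \<in> NC"
proof -
  obtain c where c: "b = (\<Sum>i=1..r. real (c i) *\<^sub>R alpha i)" using b unfolding nonneg_comb_def by blast
  have z: "\<forall>i\<in>{1..r}. i \<notin> J \<longrightarrow> c i = 0" using cp_lam_zero_iff[OF b(1) c] b(3) by blast
  have "b = (\<Sum>i\<in>J. real (c i) *\<^sub>R alpha i)"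
    unfolding c by (rule sum.mono_neutral_right) (use J_sub z in auto)
  then have "u b = (\<Sum>i\<in>J. real (c i) *\<^sub>R u (alpha i))"
    using W_ortho[OF MR_W[OF u]] by (simp add: ortho_sum ortho_scale)
  also have "\<dots> \<in> NC" using H1[OF u] finite_subset[OF J_sub]
    by (intro NC_sum NC_scale) auto
  finally show ?thesis .
qed

lemma all_pos_id: assumes K: "K \<subseteq> {1..r}" and v: "v \<in> weyl_gen alpha K"
  and pos: "\<forall>b\<in>R. b \<in> NC \<longrightarrow> v b \<in> NC"
  shows "v = id"
proof -
  have vW: "v \<in> WW" using wg_mono[OF K v] .
  obtain ks where ks: "set ks \<subseteq> {1..r}" "length ks = wl v" "wprod alpha ks = v"
    using wlen_word[OF vW] by blast
  show ?thesis
  proof (cases ks rule: rev_exhaust)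
    case Nil then show ?thesis using ks by simp
  next
    case (snoc ks' i)
    have i: "i \<in> {1..r}" and ks': "set ks' \<subseteq> {1..r}" using ks snoc by auto
    have ve: "v = wprod alpha ks' \<circ> refl_v (alpha i)" using ks(3) snoc by (simp add: wprod_append)
    have "v (alpha i) = - wprod alpha ks' (alpha i)"
      using ve refl_self[OF alpha_nz[OF i]] ortho_neg[OF wprod_ortho[OF ks']] by simp
    moreover have "v (alpha i) \<in> NC" using pos alphaR[OF i] NC_alpha[OF i] by blast
    ultimately have "- wprod alpha ks' (alpha i) \<in> NC" by simp
    then obtain js where js: "set js \<subseteq> {1..r}" "length js + 1 = length ks'"
      "wprod alpha js = wprod alpha ks' \<circ> refl_v (alpha i)"
      using exchange[OF ks' i] by blast
    have "wl v \<le> length js" using wlen_le[OF js(1)] js(3) ve by simp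
    then show ?thesis using js(2) ks(2) snoc by simp
  qed
qed

lemma H3: assumes u1: "u1 \<in> MR" and v: "v \<in> WJ" and u2: "u1 \<circ> v \<in> MR"
  shows "v = id"
proof (rule all_pos_id[OF J_sub v], intro ballI impI)
  fix b assume bR: "b \<in> R" and bNC: "b \<in> NC"
  have vo: "ortho v" using W_ortho[OF WJ_W[OF v]] .
  have "coroot_pair lam b \<ge> 0" using cp_lam_NC[OF bNC] .
  then consider "coroot_pair lam b > 0" | "coroot_pair lam b = 0" by linarith
  then show "v b \<in> NC"
  proof cases
    case 1 then show ?thesis using pos_pres_J[OF v bR] by blast
  next
    case 2
    show ?thesis
    proof (rule ccontr)
      assume "v b \<notin> NC"
      moreover have vbR: "v b \<in> R" using W_R[OF WJ_W[OF v] bR] .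
      ultimately have n: "- v b \<in> NC" using pn by blast
      have "coroot_pair lam (v b) = 0" using ortho_cp[OF vo, of lam b] WJ_fix[OF v] 2 by simp
      then have "coroot_pair lam (- v b) = 0" by (simp add: cp_negr)
      then have "u1 (- v b) \<in> NC" using H_J_pos[OF u1 negR[OF vbR] n] by blast
      then have "- (u1 \<circ> v) b \<in> NC" using ortho_neg[OF W_ortho[OF MR_W[OF u1]]] by simp
      moreover have "(u1 \<circ> v) b \<in> NC" using H_J_pos[OF u2 bR bNC 2] .
      moreover have "(u1 \<circ> v) b \<in> R" using W_R[OF MR_W[OF u2] bR] .
      ultimately show False using root_excl by blast
    qed
  qed
qed

lemma floor_ex1: assumes x: "x \<in> WW"
  shows "\<exists>!u. u \<in> MR \<and> (\<exists>v\<in>WJ. u = x \<circ> v)"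
proof -
  have "\<exists>u. (\<exists>v\<in>WJ. u = x \<circ> v) \<and> (\<forall>y. (\<exists>v\<in>WJ. y = x \<circ> v) \<longrightarrow> wl u \<le> wl y)"
    by (rule ex_has_least_nat[of "\<lambda>y. \<exists>v\<in>WJ. y = x \<circ> v" x]) (rule bexI[OF _ wg_id], simp)
  then obtain u v0 where u: "v0 \<in> WJ" "u = x \<circ> v0" and umin: "\<forall>y. (\<exists>v\<in>WJ. y = x \<circ> v) \<longrightarrow> wl u \<le> wl y"
    by blast
  have "u \<in> MR"
    unfolding minrep_def
  proof (intro CollectI conjI ballI)
    show "u \<in> WW" using u wg_comp[OF x WJ_W[OF u(1)]] by simp
    fix v' assume v': "v' \<in> WJ"
    have "u \<circ> v' = x \<circ> (v0 \<circ> v')" using u by (simp add: comp_assoc)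
    moreover have "v0 \<circ> v' \<in> WJ" using wg_comp u(1) v' by blast
    ultimately show "wl u \<le> wl (u \<circ> v')" using umin by blast
  qed
  moreover have uniq: "u1 = u2" if h: "u1 \<in> MR" "v1 \<in> WJ" "u1 = x \<circ> v1" "u2 \<in> MR" "v2 \<in> WJ" "u2 = x \<circ> v2"
    for u1 u2 v1 v2
  proof -
    obtain w1 where w1: "w1 \<in> WJ" "w1 \<circ> v1 = id" "v1 \<circ> w1 = id" using wg_inv[OF J_sub h(2)] by blast
    have "u1 \<circ> (w1 \<circ> v2) = x \<circ> (v1 \<circ> w1) \<circ> v2" using h(3) by (simp add: comp_assoc)
    also have "\<dots> = u2" using w1(3) h(6) by simp
    finally have e: "u1 \<circ> (w1 \<circ> v2) = u2" .
    have "w1 \<circ> v2 = id" using H3[OF h(1) wg_comp[OF w1(1) h(5)]] e h(4) by simp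
    then show ?thesis using e by simp
  qed
  have ux: "\<exists>v\<in>WJ. u = x \<circ> v" using u by blast
  show ?thesis
  proof (rule ex1I[of _ u])
    show "u \<in> MR \<and> (\<exists>v\<in>WJ. u = x \<circ> v)" using \<open>u \<in> MR\<close> ux by blast
    fix y assume "y \<in> MR \<and> (\<exists>v\<in>WJ. y = x \<circ> v)"
    then obtain vy where "y \<in> MR" "vy \<in> WJ" "y = x \<circ> vy" by blast
    then show "y = u" using uniq[OF _ _ _ \<open>u \<in> MR\<close> u(1) u(2)] by blast
  qed
qed

lemma floor_props: assumes x: "x \<in> WW"
  shows "floorJ r alpha J x \<in> MR \<and> (\<exists>v\<in>WJ. floorJ r alpha J x = x \<circ> v)"
  unfolding floorJ_def by (rule theI'[OF floor_ex1[OF x]])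

lemma floor_lam: assumes x: "x \<in> WW" shows "floorJ r alpha J x lam = x lam"
proof -
  obtain v where v: "v \<in> WJ" "floorJ r alpha J x = x \<circ> v" using floor_props[OF x] by blast
  then show ?thesis using WJ_fix[OF v(1)] by simp
qed

lemma floor_self: assumes u: "u \<in> MR" shows "floorJ r alpha J u = u"
proof -
  have "\<exists>v\<in>WJ. u = u \<circ> v" by (rule bexI[OF _ wg_id]) simp
  then have "u \<in> MR \<and> (\<exists>v\<in>WJ. u = u \<circ> v)" using u by blast
  then show ?thesis unfolding floorJ_def using the1_equality[OF floor_ex1[OF MR_W[OF u]]] by blast
qed

lemma L_word: "set ks \<subseteq> {1..r} \<Longrightarrow> Lf (wprod alpha ks lam) \<le> length ks"
proof (induction ks)
  case Nil
  have e: "{b\<in>R. b \<in> NC \<and> coroot_pair lam b < 0} = {}" using cp_lam_NC by force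
  show ?case unfolding Lf_def by (simp only: wprod_Nil id_apply e card.empty list.size(3) order_refl)
next
  case (Cons i ks)
  then show ?case using L_simple_le[of i "wprod alpha ks lam"] by simp
qed

lemma Q: assumes "x \<in> WW" shows "\<exists>v\<in>WJ. wl (x \<circ> v) \<le> Lf (x lam)"
  using assms
proof (induction "wl x" arbitrary: x rule: less_induct)
  case less
  obtain ks where ks: "set ks \<subseteq> {1..r}" "length ks = wl x" "wprod alpha ks = x"
    using wlen_word[OF less.prems] by blast
  show ?case
  proof (cases ks)
    case Nil
    then have "x = id" using ks by simp
    moreover have "wl (wprod alpha []) \<le> 0" using wlen_le[of "[]"] by simp
    ultimately show ?thesis by (intro bexI[OF _ wg_id]) simp
  next
    case (Cons i ks'')
    have i: "i \<in> {1..r}" and ks'': "set ks'' \<subseteq> {1..r}" using ks Cons by auto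
    let ?x = "wprod alpha ks''"
    have xW: "?x \<in> WW" using ks'' weyl_gen_iff by blast
    have xx: "x = refl_v (alpha i) \<circ> ?x" using ks Cons by simp
    have "wl ?x < wl x" using wlen_le[OF ks''] ks(2) Cons by simp
    from less.hyps[OF this xW] obtain v where v: "v \<in> WJ" "wl (?x \<circ> v) \<le> Lf (?x lam)" by blast
    let ?mu = "?x lam"
    have xlam: "x lam = refl_v (alpha i) ?mu" using xx by simp
    have xo: "ortho ?x" using wprod_ortho[OF ks''] .
    let ?y = "wprod alpha (rev ks'')"
    let ?beta = "?y (alpha i)"
    have xb: "?x ?beta = alpha i" using wprod_rev2[OF ks''] by (simp add: fun_eq_iff)
    have bR: "?beta \<in> R" using wprod_R[of "rev ks''"] ks'' alphaR[OF i] by simp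
    have cpb: "coroot_pair lam ?beta = coroot_pair ?mu (alpha i)"
      using ortho_cp[OF xo, of lam ?beta] xb by simp
    consider "coroot_pair ?mu (alpha i) > 0" | "coroot_pair ?mu (alpha i) = 0" | "coroot_pair ?mu (alpha i) < 0"
      by linarith
    then show ?thesis
    proof cases
      case 1
      have "Lf (x lam) \<ge> Lf ?mu + 1" using L_up[OF alphaR[OF i] NC_alpha[OF i] 1] xlam by simp
      moreover have "wl (x \<circ> v) \<le> wl (?x \<circ> v) + 1"
        using wlen_comp_le[OF wg_comp[OF xW WJ_W[OF v(1)]] i] xx by (simp add: comp_assoc)
      ultimately show ?thesis using v(2) by (intro bexI[OF _ v(1)]) linarith
    next
      case 2
      have rb: "refl_v ?beta \<in> WJ" using refl_in_WJ[OF bR] cpb 2 by simp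
      have xr: "x = ?x \<circ> refl_v ?beta"
      proof
        fix z
        have "?x (refl_v ?beta z) = refl_v (alpha i) (?x z)" using refl_conj[OF xo] xb by simp
        then show "x z = (?x \<circ> refl_v ?beta) z" using xx by simp
      qed
      have "x \<circ> (refl_v ?beta \<circ> v) = ?x \<circ> (refl_v ?beta \<circ> refl_v ?beta) \<circ> v"
        using xr by (simp add: comp_assoc)
      also have "\<dots> = ?x \<circ> v" using refl_invol_comp[OF R_nz[OF bR]] by simp
      finally have "x \<circ> (refl_v ?beta \<circ> v) = ?x \<circ> v" .
      moreover have "x lam = ?mu" using xlam 2 by (simp add: refl_v_def)
      ultimately show ?thesis using v(2) by (intro bexI[OF _ wg_comp[OF rb v(1)]]) simp
    next
      case 3
      let ?z = "?x \<circ> v"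
      have zW: "?z \<in> WW" using wg_comp[OF xW WJ_W[OF v(1)]] .
      obtain zs where zs: "set zs \<subseteq> {1..r}" "length zs = wl ?z" "wprod alpha zs = ?z"
        using wlen_word[OF zW] by blast
      obtain vi where vi: "vi \<in> WJ" "vi \<circ> v = id" "v \<circ> vi = id" using wg_inv[OF J_sub v(1)] by blast
      have zi: "wprod alpha (rev zs) = vi \<circ> ?y"
      proof -
        have "wprod alpha (rev zs) = wprod alpha (rev zs) \<circ> (?x \<circ> (v \<circ> vi) \<circ> ?y)"
          using vi(3) wprod_rev2[OF ks''] by simp
        also have "\<dots> = (wprod alpha (rev zs) \<circ> wprod alpha zs) \<circ> (vi \<circ> ?y)"
          using zs(3) by (simp add: comp_assoc)
        also have "\<dots> = vi \<circ> ?y" using wprod_rev[OF zs(1)] by simp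
        finally show ?thesis .
      qed
      have "coroot_pair lam (- ?beta) > 0" using cpb 3 by (simp add: cp_negr cp_neg)
      then have "vi (- ?beta) \<in> NC" using pos_pres_J[OF vi(1) negR[OF bR]] by blast
      then have "- wprod alpha (rev zs) (alpha i) \<in> NC"
        using zi ortho_neg[OF W_ortho[OF WJ_W[OF vi(1)]]] by simp
      from exchange_left[OF zs(1) i this] obtain js where js0: "set js \<subseteq> {1..r}" "length js + 1 = length zs"
          "wprod alpha js = refl_v (alpha i) \<circ> wprod alpha zs" by blast
      have js: "set js \<subseteq> {1..r}" "length js + 1 = length zs" "wprod alpha js = refl_v (alpha i) \<circ> ?z"
        using js0 zs(3) by simp_all
      have "wl (x \<circ> v) \<le> length js" using wlen_le[OF js(1)] js(3) xx by (simp add: comp_assoc)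
      moreover have "Lf ?mu \<le> Lf (x lam) + 1"
        using L_simple_le[OF i, of "refl_v (alpha i) ?mu"] xlam refl_invol[OF alpha_nz[OF i]] by simp
      ultimately show ?thesis using v(2) zs(2) js(2) by (intro bexI[OF _ v(1)]) linarith
    qed
  qed
qed

lemma wl_MR: assumes u: "u \<in> MR" shows "wl u = Lf (u lam)"
proof (rule antisym)
  obtain v where v: "v \<in> WJ" "wl (u \<circ> v) \<le> Lf (u lam)" using Q[OF MR_W[OF u]] by blast
  then show "wl u \<le> Lf (u lam)" using MR_min[OF u v(1)] by simp
  obtain ks where ks: "set ks \<subseteq> {1..r}" "length ks = wl u" "wprod alpha ks = u"
    using wlen_word[OF MR_W[OF u]] by blast
  show "Lf (u lam) \<le> wl u" using L_word[OF ks(1)] ks by simp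
qed

lemma wl_floor: assumes x: "x \<in> WW" shows "wl (floorJ r alpha J x) = Lf (x lam)"
  using wl_MR floor_props[OF x] floor_lam[OF x] by simp

end


context rsysl begin

lemma rho_eq: assumes w: "w \<in> WW" and b: "b \<in> R"
  shows "2 * coroot_pair (rho_vec (pos_roots R r alpha) - rho_vec (pos_roots_J R r alpha J)) b
       = (\<Sum>a\<in>Uset (w lam). coroot_pair a (w b))"
proof -
  let ?P = "pos_roots R r alpha" and ?PJ = "pos_roots_J R r alpha J"
  let ?A = "{a\<in>R. coroot_pair lam a > 0}"
  have PR: "?P \<subseteq> R" by (auto simp: pos_roots_def)
  have finP: "finite ?P" using finite_subset[OF PR finR] .
  have sub: "?PJ \<subseteq> ?P" by (auto simp: pos_roots_J_def)
  have "rho_vec ?P - rho_vec ?PJ = (1/2) *\<^sub>R (\<Sum>g\<in>?P - ?PJ. g)"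
    by (simp add: rho_vec_def sum_diff[OF finP sub] scaleR_diff_right)
  then have "2 * coroot_pair (rho_vec ?P - rho_vec ?PJ) b = coroot_pair (\<Sum>g\<in>?P - ?PJ. g) b"
    by (simp add: cp_scale)
  also have "\<dots> = (\<Sum>g\<in>?P - ?PJ. coroot_pair g b)"
    using finP by (simp add: cp_sum)
  also have "?P - ?PJ = ?A" using PJ_iff PR by blast
  finally have e1: "2 * coroot_pair (rho_vec ?P - rho_vec ?PJ) b = (\<Sum>g\<in>?A. coroot_pair g b)" .
  have wo: "ortho w" using W_ortho[OF w] .
  obtain wi where wi: "wi \<in> WW" "wi \<circ> w = id" "w \<circ> wi = id" using wg_inv[OF _ w] by blast
  have U: "Uset (w lam) = w ` ?A"
  proof (intro set_eqI iffI)
    fix a assume "a \<in> Uset (w lam)"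
    then have a: "a \<in> R" "coroot_pair (w lam) a > 0" by (auto simp: Uset_def)
    have "w (wi a) = a" using wi(3) by (simp add: fun_eq_iff)
    moreover have "wi a \<in> ?A" using a W_R[OF wi(1)] ortho_cp[OF wo, of lam "wi a"] \<open>w (wi a) = a\<close> by auto
    ultimately show "a \<in> w ` ?A" by (metis image_eqI)
  next
    fix a assume "a \<in> w ` ?A"
    then show "a \<in> Uset (w lam)" using W_R[OF w] ortho_cp[OF wo] by (auto simp: Uset_def)
  qed
  have "(\<Sum>a\<in>Uset (w lam). coroot_pair a (w b)) = (\<Sum>g\<in>?A. coroot_pair (w g) (w b))"
    unfolding U using ortho_inj[OF wo] by (simp add: sum.reindex inj_on_def inj_def)
  also have "\<dots> = (\<Sum>g\<in>?A. coroot_pair g b)" using ortho_cp[OF wo] by simp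
  finally show ?thesis using e1 by simp
qed

lemma edge_basic:
  assumes e: "qbg_edge R r alpha J w b w'"
  shows "w \<in> MR" "b \<in> R" "coroot_pair lam b > 0" "w b \<in> R"
    "w' lam = refl_v (w b) (w lam)" "coroot_pair (w lam) (w b) = coroot_pair lam b"
    "w' = floorJ r alpha J (w \<circ> refl_v b)" "w \<circ> refl_v b \<in> WW"
proof -
  show wM: "w \<in> MR" using e by (simp add: qbg_edge_def)
  have bP: "b \<in> pos_roots R r alpha - pos_roots_J R r alpha J" using e by (simp add: qbg_edge_def)
  then show bR: "b \<in> R" by (simp add: pos_roots_def)
  show "coroot_pair lam b > 0" using PJ_iff[OF bR] bP by blast
  show "w b \<in> R" using W_R[OF MR_W[OF wM] bR] .
  show fl: "w' = floorJ r alpha J (w \<circ> refl_v b)" using e by (simp add: qbg_edge_def)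
  show xW: "w \<circ> refl_v b \<in> WW" using wg_comp[OF MR_W[OF wM] refl_in_W_full[OF bR]] .
  have "w' lam = (w \<circ> refl_v b) lam" using fl floor_lam[OF xW] by simp
  also have "\<dots> = refl_v (w b) (w lam)" using refl_conj[OF W_ortho[OF MR_W[OF wM]]] by simp
  finally show "w' lam = refl_v (w b) (w lam)" .
  show "coroot_pair (w lam) (w b) = coroot_pair lam b" using ortho_cp[OF W_ortho[OF MR_W[OF wM]]] .
qed

lemma edge_key:
  assumes e: "qbg_edge R r alpha J w b w'" and aR: "a \<in> R"
    and aform: "(\<exists>j\<in>{1..r}. a = alpha j) \<or> (a = - \<theta> \<and> highest_root R r alpha \<theta>)"
    and kp: "coroot_pair (w lam) a > 0" and kn: "coroot_pair (w' lam) a \<le> 0"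
  shows "coroot_pair (w lam) a = coroot_pair lam b"
proof -
  note eb = edge_basic[OF e]
  let ?g = "w b" and ?mu = "w lam"
  have k: "coroot_pair ?mu ?g > 0" using eb by simp
  have l1: "wl w' = Lf (refl_v ?g ?mu)" using wl_floor[OF eb(8)] eb(7) eb(5) floor_lam[OF eb(8)] by simp
  have l2: "wl w = Lf ?mu" using wl_MR[OF eb(1)] .
  have rho: "2 * coroot_pair (rho_vec (pos_roots R r alpha) - rho_vec (pos_roots_J R r alpha J)) b
       = (\<Sum>a\<in>Uset ?mu. coroot_pair a ?g)" using rho_eq[OF MR_W[OF eb(1)] eb(2)] .
  have "real (wl w') = real (wl w) + 1 \<or>
      real (wl w') = real (wl w)
         - 2 * coroot_pair (rho_vec (pos_roots R r alpha) - rho_vec (pos_roots_J R r alpha J)) b + 1"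
    using e unfolding qbg_edge_def by blast
  then have edge: "real (Lf (refl_v ?g ?mu)) = real (Lf ?mu) + 1 \<or>
       real (Lf (refl_v ?g ?mu)) = real (Lf ?mu) - (\<Sum>b\<in>Uset ?mu. coroot_pair b ?g) + 1"
    unfolding l1 l2 rho .
  have "?g = a" using key_gamma[OF eb(4) aR k kp _ edge aform] kn eb(5) by simp
  then show ?thesis using eb(6) by simp
qed

lemma edge_int:
  assumes e: "qbg_edge R r alpha J w b w'" and aR: "a \<in> R" and s: "\<sigma> * coroot_pair lam b \<in> \<int>"
  shows "\<sigma> * (coroot_pair (w' lam) a - coroot_pair (w lam) a) \<in> \<int>"
proof -
  note eb = edge_basic[OF e]
  have h: "coroot_pair (w' lam) a - coroot_pair (w lam) a = - (coroot_pair lam b * coroot_pair (w b) a)"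
    using eb(5) eb(6) cp_refl_mu[of "w b" "w lam" a] by simp
  have "\<sigma> * (coroot_pair (w' lam) a - coroot_pair (w lam) a) = - ((\<sigma> * coroot_pair lam b) * coroot_pair (w b) a)"
    unfolding h by (simp add: algebra_simps)
  moreover have "coroot_pair (w b) a \<in> \<int>" using cpZ[OF aR eb(4)] .
  ultimately show ?thesis using s by (simp add: Ints_mult Ints_minus)
qed

lemma path_int:
  assumes p: "sigma_path R r alpha lam \<sigma> y x n ws bs" and aR: "a \<in> R" and kl: "k \<le> l" "l \<le> n"
  shows "\<sigma> * (coroot_pair ((ws ! k) lam) a - coroot_pair ((ws ! l) lam) a) \<in> \<int>"
  using kl
proof (induction l rule: dec_induct)
  case base then show ?case by simp
next
  case (step l)
  have "l < n" using step by simp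
  then have e: "qbg_edge R r alpha J (ws ! (l+1)) (bs ! l) (ws ! l)" "\<sigma> * coroot_pair lam (bs ! l) \<in> \<int>"
    using p by (auto simp: sigma_path_def)
  have "\<sigma> * (coroot_pair ((ws ! l) lam) a - coroot_pair ((ws ! (l+1)) lam) a) \<in> \<int>"
    using edge_int[OF e(1) aR e(2)] .
  moreover have "\<sigma> * (coroot_pair ((ws ! k) lam) a - coroot_pair ((ws ! l) lam) a) \<in> \<int>"
    using step by simp
  moreover have "\<sigma> * (coroot_pair ((ws ! k) lam) a - coroot_pair ((ws ! (l+1)) lam) a)
     = \<sigma> * (coroot_pair ((ws ! k) lam) a - coroot_pair ((ws ! l) lam) a)
       + \<sigma> * (coroot_pair ((ws ! l) lam) a - coroot_pair ((ws ! (l+1)) lam) a)"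
    by (simp add: algebra_simps)
  ultimately show ?case using Ints_add by simp
qed

lemma crossing:
  assumes p: "sigma_path R r alpha lam \<sigma> y x n ws bs" and aR: "a \<in> R"
    and aform: "(\<exists>j\<in>{1..r}. a = alpha j) \<or> (a = - \<theta> \<and> highest_root R r alpha \<theta>)"
    and yp: "coroot_pair (y lam) a > 0" and ex: "\<exists>k<n. coroot_pair ((ws ! k) lam) a \<le> 0"
  shows "\<sigma> * coroot_pair (y lam) a \<in> \<int>"
proof -
  define K where "K = {k. k < n \<and> coroot_pair ((ws ! k) lam) a \<le> 0}"
  have fK: "finite K" unfolding K_def by (rule finite_subset[of _ "{..<n}"]) auto
  have neK: "K \<noteq> {}" using ex unfolding K_def by blast
  define k0 where "k0 = Max K"
  have kK: "k0 \<in> K" unfolding k0_def using Max_in[OF fK neK] .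
  then have k0n: "k0 < n" and k0c: "coroot_pair ((ws ! k0) lam) a \<le> 0" unfolding K_def by auto
  have kmax: "\<And>k. k \<in> K \<Longrightarrow> k \<le> k0" unfolding k0_def using Max_ge[OF fK] by blast
  have yn: "ws ! n = y" using p by (simp add: sigma_path_def)
  have pos1: "coroot_pair ((ws ! (k0+1)) lam) a > 0"
  proof (cases "k0 + 1 = n")
    case True then show ?thesis using yn yp by simp
  next
    case False
    then have lt: "k0 + 1 < n" using k0n by simp
    have "k0 + 1 \<notin> K"
    proof
      assume "k0 + 1 \<in> K"
      then have "k0 + 1 \<le> k0" by (rule kmax)
      then show False by simp
    qed
    then show ?thesis using lt unfolding K_def by auto
  qed
  have "qbg_edge R r alpha J (ws ! (k0+1)) (bs ! k0) (ws ! k0) \<and> \<sigma> * coroot_pair lam (bs ! k0) \<in> \<int>"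
    using p k0n unfolding sigma_path_def by blast
  then have e: "qbg_edge R r alpha J (ws ! (k0+1)) (bs ! k0) (ws ! k0)" "\<sigma> * coroot_pair lam (bs ! k0) \<in> \<int>"
    by blast+
  have "coroot_pair ((ws ! (k0+1)) lam) a = coroot_pair lam (bs ! k0)"
    using edge_key[OF e(1) aR aform pos1 k0c] .
  then have i1: "\<sigma> * coroot_pair ((ws ! (k0+1)) lam) a \<in> \<int>" using e(2) by simp
  have "\<sigma> * (coroot_pair ((ws ! (k0+1)) lam) a - coroot_pair ((ws ! n) lam) a) \<in> \<int>"
    using path_int[OF p aR, of "k0+1" n] k0n by simp
  then have i2: "\<sigma> * coroot_pair ((ws ! (k0+1)) lam) a - \<sigma> * coroot_pair (y lam) a \<in> \<int>"
    using yn by (simp add: algebra_simps)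
  have "\<sigma> * coroot_pair (y lam) a = \<sigma> * coroot_pair ((ws ! (k0+1)) lam) a
      - (\<sigma> * coroot_pair ((ws ! (k0+1)) lam) a - \<sigma> * coroot_pair (y lam) a)" by simp
  then show ?thesis using Ints_diff[OF i1 i2] by simp
qed

end

lemma tele:
  fixes s p :: "nat \<Rightarrow> real"
  assumes s0: "s 0 = 0" and u: "1 \<le> u"
  shows "(\<Sum>l\<in>{1..<u}. (s l - s (l-1)) * p l) + (s u - s (u-1)) * p u
       = s u * p u + (\<Sum>l\<in>{1..<u}. s l * (p l - p (Suc l)))"
  using u
proof (induction u rule: nat_induct_at_least)
  case base then show ?case using s0 by simp
next
  case (Suc u)
  have "(\<Sum>l\<in>{1..<Suc u}. (s l - s (l-1)) * p l) + (s (Suc u) - s u) * p (Suc u)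
      = ((\<Sum>l\<in>{1..<u}. (s l - s (l-1)) * p l) + (s u - s (u-1)) * p u) + (s (Suc u) - s u) * p (Suc u)"
    using Suc.hyps by simp
  also have "\<dots> = s u * p u + (\<Sum>l\<in>{1..<u}. s l * (p l - p (Suc l))) + (s (Suc u) - s u) * p (Suc u)"
    using Suc.IH by simp
  also have "\<dots> = s (Suc u) * p (Suc u) + (\<Sum>l\<in>{1..<Suc u}. s l * (p l - p (Suc l)))"
    using Suc.hyps by (simp add: algebra_simps)
  finally show ?case by simp
qed


lemma rat_mono_aux:
  fixes \<sigma> :: "nat \<Rightarrow> rat"
  assumes "\<forall>k<s. \<sigma> k < \<sigma> (k+1)"
  shows "k + 1 + d \<le> s \<Longrightarrow> \<sigma> k < \<sigma> (k + 1 + d)"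
proof (induction d)
  case 0 then show ?case using assms by simp
next
  case (Suc d)
  then have "\<sigma> k < \<sigma> (k + 1 + d)" by simp
  moreover have "\<sigma> (k + 1 + d) < \<sigma> (k + 1 + d + 1)" using assms Suc.prems by simp
  ultimately show ?case by simp
qed

lemma rat_mono:
  fixes \<sigma> :: "nat \<Rightarrow> rat"
  assumes "\<forall>k<s. \<sigma> k < \<sigma> (k+1)" "k < l" "l \<le> s"
  shows "\<sigma> k < \<sigma> l"
  using rat_mono_aux[OF assms(1), of k "l - k - 1"] assms(2,3) by simp

theorem lemma4p10:
  fixes R :: "'a::euclidean_space set" and r :: nat and alpha :: "nat \<Rightarrow> 'a" and \<theta> :: 'a
    and m :: "nat \<Rightarrow> nat" and lam :: 'a
    and s :: nat and x :: "nat \<Rightarrow> ('a \<Rightarrow> 'a)" and \<sigma> :: "nat \<Rightarrow> rat"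
    and j :: nat and u :: nat
  assumes rs: "root_system R" and irr: "irreducible_rs R" and rpos: "r \<ge> 1"
    and simple: "simple_system R r alpha"
    and hr: "highest_root R r alpha \<theta>"
    and lam: "\<forall>i\<in>{1..r}. coroot_pair lam (alpha i) = real (m i)"
    and eta: "in_Bcl R r alpha lam s x \<sigma>"
    and j: "j \<in> {0..r}"
    and u: "1 \<le> u" "u \<le> s - 1"
    and pos: "pair_I alpha \<theta> (x (u+1) lam) j > 0"
  shows "(\<forall>n ws bs. sigma_path R r alpha lam (of_rat (\<sigma> u)) (x (u+1)) (x u) n ws bs \<and>
              (\<exists>k<n. pair_I alpha \<theta> ((ws ! k) lam) j \<le> 0)
            \<longrightarrow> H_eta alpha \<theta> lam s x \<sigma> j (of_rat (\<sigma> u)) \<in> \<int>) \<and>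
         (pair_I alpha \<theta> (x u lam) j \<le> 0 \<longrightarrow> H_eta alpha \<theta> lam s x \<sigma> j (of_rat (\<sigma> u)) \<in> \<int>)"
proof -
  interpret rsysl R r alpha lam m
    by unfold_locales (use rs simple lam in auto)
  define a0 where "a0 = (if j = 0 then - \<theta> else alpha j)"
  have thR: "\<theta> \<in> R" using hr by (simp add: highest_root_def pos_roots_def)
  have a0R: "a0 \<in> R" using thR negR alphaR j by (auto simp: a0_def)
  have aform: "(\<exists>j'\<in>{1..r}. a0 = alpha j') \<or> (a0 = - \<theta> \<and> highest_root R r alpha \<theta>)"
    using j hr by (auto simp: a0_def)
  have pairI: "\<And>\<mu>. pair_I alpha \<theta> \<mu> j = coroot_pair \<mu> a0" by (simp add: pair_I_def a0_def cp_negr)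
  have xne: "\<forall>k\<in>{1..<s}. x k \<noteq> x (k+1)" and s0: "\<sigma> 0 = 0"
    and mono: "\<forall>k<s. \<sigma> k < \<sigma> (k+1)"
    and paths: "\<forall>k\<in>{1..<s}. \<exists>n ws bs. sigma_path R r alpha lam (of_rat (\<sigma> k)) (x (k+1)) (x k) n ws bs"
    using eta unfolding in_Bcl_def by blast+
  have us: "u < s" using u by linarith
  define S where "S l = (of_rat (\<sigma> l) :: real)" for l
  define p where "p l = coroot_pair (x l lam) a0" for l
  have least: "(LEAST k. 1 \<le> k \<and> (of_rat (\<sigma> u) :: real) \<le> of_rat (\<sigma> k)) = u"
  proof (rule Least_equality)
    show "1 \<le> u \<and> (of_rat (\<sigma> u) :: real) \<le> of_rat (\<sigma> u)" using u by simp
    fix k assume k: "1 \<le> k \<and> (of_rat (\<sigma> u) :: real) \<le> of_rat (\<sigma> k)"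
    show "u \<le> k"
    proof (rule ccontr)
      assume "\<not> u \<le> k"
      then have "\<sigma> k < \<sigma> u" using rat_mono[OF mono, of k u] us by simp
      then have "(of_rat (\<sigma> k) :: real) < of_rat (\<sigma> u)" by (simp add: of_rat_less)
      then show False using k by simp
    qed
  qed
  have H: "H_eta alpha \<theta> lam s x \<sigma> j (of_rat (\<sigma> u))
      = (\<Sum>l\<in>{1..<u}. (S l - S (l-1)) * p l) + (S u - S (u-1)) * p u"
    unfolding H_eta_def eta_at_def Let_def least pairI
    by (simp add: cp_add cp_sum cp_scale S_def p_def of_rat_diff)
  also have "\<dots> = S u * p u + (\<Sum>l\<in>{1..<u}. S l * (p l - p (Suc l)))"
    by (rule tele) (use s0 u in \<open>simp_all add: S_def\<close>)
  finally have H2: "H_eta alpha \<theta> lam s x \<sigma> j (of_rat (\<sigma> u)) = S u * p u + (\<Sum>l\<in>{1..<u}. S l * (p l - p (Suc l)))" .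
  have sumZ: "(\<Sum>l\<in>{1..<u}. S l * (p l - p (Suc l))) \<in> \<int>"
  proof (rule Ints_sum)
    fix l assume l: "l \<in> {1..<u}"
    then have "l \<in> {1..<s}" using us by simp
    then obtain n ws bs where pth: "sigma_path R r alpha lam (of_rat (\<sigma> l)) (x (l+1)) (x l) n ws bs"
      using paths by blast
    have "ws ! 0 = x l" "ws ! n = x (l+1)" using pth by (auto simp: sigma_path_def)
    then show "S l * (p l - p (Suc l)) \<in> \<int>"
      using path_int[OF pth a0R, of 0 n] by (simp add: S_def p_def)
  qed
  have pu1: "p (u+1) > 0" using pos pairI by (simp add: p_def)
  have main: "S u * p u \<in> \<int>"
    if pth: "sigma_path R r alpha lam (of_rat (\<sigma> u)) (x (u+1)) (x u) n ws bs"
      and ex: "\<exists>k<n. coroot_pair ((ws ! k) lam) a0 \<le> 0" for n ws bs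
  proof -
    have c1: "S u * p (u+1) \<in> \<int>"
      using crossing[OF pth a0R aform _ ex] pu1 by (simp add: S_def p_def)
    have "ws ! 0 = x u" "ws ! n = x (u+1)" using pth by (auto simp: sigma_path_def)
    then have c2: "S u * (p u - p (u+1)) \<in> \<int>"
      using path_int[OF pth a0R, of 0 n] by (simp add: S_def p_def)
    have "S u * p u = S u * (p u - p (u+1)) + S u * p (u+1)" by (simp add: algebra_simps)
    then show ?thesis using Ints_add[OF c2 c1] by simp
  qed
  show ?thesis
  proof (intro conjI allI impI)
    fix n ws bs
    assume h: "sigma_path R r alpha lam (of_rat (\<sigma> u)) (x (u+1)) (x u) n ws bs \<and>
              (\<exists>k<n. pair_I alpha \<theta> ((ws ! k) lam) j \<le> 0)"
    then have "S u * p u \<in> \<int>" using main pairI by auto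
    then show "H_eta alpha \<theta> lam s x \<sigma> j (of_rat (\<sigma> u)) \<in> \<int>" using H2 sumZ Ints_add by simp
  next
    assume h: "pair_I alpha \<theta> (x u lam) j \<le> 0"
    have "u \<in> {1..<s}" using u us by simp
    then obtain n ws bs where pth: "sigma_path R r alpha lam (of_rat (\<sigma> u)) (x (u+1)) (x u) n ws bs"
      using paths by blast
    have w0: "ws ! 0 = x u" "ws ! n = x (u+1)" using pth by (auto simp: sigma_path_def)
    have "n \<noteq> 0"
    proof
      assume "n = 0"
      then have "x u = x (u+1)" using w0 by simp
      then show False using xne \<open>u \<in> {1..<s}\<close> by blast
    qed
    then have "\<exists>k<n. coroot_pair ((ws ! k) lam) a0 \<le> 0" using w0 h pairI by (intro exI[of _ 0]) auto
    then have "S u * p u \<in> \<int>" using main[OF pth] by blast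
    then show "H_eta alpha \<theta> lam s x \<sigma> j (of_rat (\<sigma> u)) \<in> \<int>" using H2 sumZ Ints_add by simp
  qed
qed

end
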